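(* Let $\rho:U^>_q(L\mathfrak{sl}_2)\to\mathcal B$ be the algebra homomorphism determined by $M_{1,n}=e_{-n}\mapsto\sum_{i=1}^{r+1}x_i^n\prod_{j\ne i}\frac{x_i}{x_i-x_j}\Gamma_i$ for all $n\in\mathbb Z$ (equivalently $\mathfrak m_1(z)\mapsto\mathfrak e(\mathfrak q^{-1/2}z)$). Then for all $\alpha\ge1$ and $n\in\mathbb Z$, \[\rho(M_{\alpha,n})=\sum_{J\subset\{1,\dots,r+1\},\,|J|=\alpha}\prod_{i\in J}x_i^n\cdot\prod_{i\in J}^{j\notin J}\frac{x_i}{x_i-x_j}\cdot\prod_{i\in J}\Gamma_i.\]
   Context: Let $q$ be a formal variable, $\mathfrak q=q^2$ (so $\mathfrak q^{1/2}=q$), and $r\in\mathbb N$. $U^>_q(L\mathfrak{sl}_2)$ is the $\mathbb C(q)$-algebra generated by $e_p$ ($p\in\mathbb Z$) subject to $(z-q^2w)e(z)e(w)=(q^2z-w)e(w)e(z)$, $e(z)=\sum_pe_pz^{-p}$. Set $M_{1,n}=e_{-n}$ and for $k\ge1$, $M_{k,n}=\frac{(-1)^{k(k-1)/2}}{(1-\mathfrak q)^{k-1}}Y_k$ with $Y_1=M_{1,n-k+1}$, $Y_j=[Y_{j-1},M_{1,n-k+2j-1}]_{\mathfrak q^j}$ ($2\le j\le k$), $[x,y]_c=xy-c\,yx$; $\mathfrak m_1(z)=\sum_nM_{1,n}z^n$. $\mathcal B$ is the $\mathbb C(q)$-algebra generated by $x_i^{\pm1},\Gamma_i^{\pm1}$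 ($1\le i\le r+1$), all commuting except $\Gamma_ix_i=\mathfrak q\,x_i\Gamma_i$, localized at the multiplicative set generated by $x_i-\mathfrak q^mx_j$ ($i\ne j$, $m\in\mathbb Z$). With $\delta(z)=\sum_nz^n$, $\mathfrak e(z)=\sum_{i=1}^{r+1}\delta(\mathfrak q^{1/2}x_iz)\prod_{j\ne i}\frac{x_i}{x_i-x_j}\Gamma_i$. The assignment defining $\rho$ is known to extend to an algebra homomorphism (it arises from a GKLO-type homomorphism). *)

theory Defs
  imports Complex_Main "HOL-Computational_Algebra.Polynomial" "HOL-Computational_Algebra.Fraction_Field"
begin

type_synonym Cq = "complex poly fract"

definition qvar :: Cq where "qvar = Fract [:0, 1:] 1"

definition qfrak :: Cq where "qfrak = qvar ^ 2"

definition runit :: "'a::ring_1 \<Rightarrow> bool" where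
  "runit a \<longleftrightarrow> (\<exists>b. a * b = 1 \<and> b * a = 1)"

definition rinv :: "'a::ring_1 \<Rightarrow> 'a" where
  "rinv a = (THE b. a * b = 1 \<and> b * a = 1)"

definition zpow :: "'a::ring_1 \<Rightarrow> int \<Rightarrow> 'a" where
  "zpow a n = (if 0 \<le> n then a ^ nat n else rinv a ^ nat (- n))"

definition qcomm :: "'a::ring_1 \<Rightarrow> 'a \<Rightarrow> 'a \<Rightarrow> 'a" where
  "qcomm s a b = a * b - s * b * a"

definition rhoE :: "nat \<Rightarrow> (nat \<Rightarrow> 'a::ring_1) \<Rightarrow> (nat \<Rightarrow> 'a) \<Rightarrow> int \<Rightarrow> 'a" where
  "rhoE r x G n = (\<Sum>i\<in>{1..r+1}.
      zpow (x i) n * prod_list (map (\<lambda>j. x i * rinv (x i - x j)) (filter (\<lambda>j. j \<noteq> i) [1..<r+2])) * G i)"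

text \<open>Iterated q-commutators Y_j (j \<ge> 1) for M_{k,n}, computed with images E p = rho(M_{1,p}),
  and scalar embedding c: Y_1 = E(n-k+1), Y_j = [Y_{j-1}, E(n-k+2j-1)]_{qfrak^j}.\<close>
fun Yaux :: "(Cq \<Rightarrow> 'a::ring_1) \<Rightarrow> (int \<Rightarrow> 'a) \<Rightarrow> nat \<Rightarrow> int \<Rightarrow> nat \<Rightarrow> 'a" where
  "Yaux c E k n 0 = 0"
| "Yaux c E k n (Suc 0) = E (n - int k + 1)"
| "Yaux c E k n (Suc (Suc j)) =
     qcomm (c (qfrak ^ (Suc (Suc j)))) (Yaux c E k n (Suc j)) (E (n - int k + 2 * int (Suc (Suc j)) - 1))"

definition Mimg :: "(Cq \<Rightarrow> 'a::ring_1) \<Rightarrow> (int \<Rightarrow> 'a) \<Rightarrow> nat \<Rightarrow> int \<Rightarrow> 'a" where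
  "Mimg c E k n = c ((-1) ^ (k * (k - 1) div 2) / (1 - qfrak) ^ (k - 1)) * Yaux c E k n k"

end

theory Submission
  imports Defs "HOL-Algebra.FiniteProduct"
begin


lemma runitI: "a * b = 1 \<Longrightarrow> b * a = 1 \<Longrightarrow> runit a"
  unfolding runit_def by blast

lemma rinv_eq: assumes "a * b = 1" "b * a = 1" shows "rinv a = b"
proof -
  have u: "\<And>b'. a * b' = 1 \<and> b' * a = 1 \<Longrightarrow> b' = b"
  proof -
    fix b' assume h: "a * b' = 1 \<and> b' * a = 1"
    have "b' = b' * (a * b)" using assms by simp
    also have "\<dots> = (b' * a) * b" by (simp only: mult.assoc)
    also have "\<dots> = b" using h by simp
    finally show "b' = b" .
  qed
  show ?thesis unfolding rinv_def 
    apply (rule the_equality)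
    using assms apply simp
    using u by blast
qed

lemma rinv_r: assumes "runit a" shows "a * rinv a = 1"
proof -
  obtain b where "a * b = 1" "b * a = 1" using assms unfolding runit_def by blast
  then show ?thesis using rinv_eq[of a b] by simp
qed
lemma rinv_l: assumes "runit a" shows "rinv a * a = 1"
proof -
  obtain b where "a * b = 1" "b * a = 1" using assms unfolding runit_def by blast
  then show ?thesis using rinv_eq[of a b] by simp
qed

lemma runit_rinv: "runit a \<Longrightarrow> runit (rinv a)"
  by (rule runitI[of _ a]) (simp_all add: rinv_r rinv_l)
lemma rinv_rinv: "runit a \<Longrightarrow> rinv (rinv a) = a"
  by (rule rinv_eq) (simp_all add: rinv_r rinv_l)

lemma runit_one[simp]: "runit 1" by (rule runitI[of 1 1]) simp_all
lemma rinv_one[simp]: "rinv 1 = 1" by (rule rinv_eq) simp_all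

lemma assoc4: "(a::'a::ring_1) * b * (c * d) = a * (b * c) * d"
  by (simp add: mult.assoc)

lemma runit_mult: assumes "runit a" "runit b" shows "runit (a * b)"
proof (rule runitI[of _ "rinv b * rinv a"])
  show "a * b * (rinv b * rinv a) = 1"
    by (simp only: assoc4 rinv_r assms) (simp add: rinv_r assms)
  show "rinv b * rinv a * (a * b) = 1"
    by (simp only: assoc4 rinv_l assms) (simp add: rinv_l assms)
qed

lemma rinv_mult: assumes "runit a" "runit b" shows "rinv (a * b) = rinv b * rinv a"
proof (rule rinv_eq)
  show "a * b * (rinv b * rinv a) = 1"
    by (simp only: assoc4 rinv_r assms) (simp add: rinv_r assms)
  show "rinv b * rinv a * (a * b) = 1"
    by (simp only: assoc4 rinv_l assms) (simp add: rinv_l assms)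
qed

lemma runit_minus: "runit a \<Longrightarrow> runit (- a)"
  by (rule runitI[of _ "- rinv a"]) (simp_all add: rinv_r rinv_l)
lemma rinv_minus: "runit a \<Longrightarrow> rinv (- a) = - rinv a"
  by (rule rinv_eq) (simp_all add: rinv_r rinv_l)

lemma runit_power: "runit a \<Longrightarrow> runit (a ^ n)"
  by (induction n) (simp_all add: runit_mult)

lemma zpow_runit: "runit a \<Longrightarrow> runit (zpow a n)"
  unfolding zpow_def by (simp add: runit_power runit_rinv)

definition bic :: "'a::ring_1 set \<Rightarrow> 'a set" where
  "bic W = {a. \<forall>b. (\<forall>w\<in>W. b * w = w * b) \<longrightarrow> a * b = b * a}"

definition pcomm :: "'a::ring_1 set \<Rightarrow> bool" where
  "pcomm W \<longleftrightarrow> (\<forall>v\<in>W. \<forall>w\<in>W. v * w = w * v)"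

lemma bicI: "(\<And>b. (\<And>w. w \<in> W \<Longrightarrow> b * w = w * b) \<Longrightarrow> a * b = b * a) \<Longrightarrow> a \<in> bic W"
  unfolding bic_def by blast

lemma bicD: "a \<in> bic W \<Longrightarrow> (\<And>w. w \<in> W \<Longrightarrow> b * w = w * b) \<Longrightarrow> a * b = b * a"
  unfolding bic_def by blast

lemma bic_W: "pcomm W \<Longrightarrow> w \<in> W \<Longrightarrow> w \<in> bic W"
  unfolding pcomm_def by (rule bicI) metis

lemma bic_central: "(\<And>y. a * y = y * a) \<Longrightarrow> a \<in> bic W"
  by (rule bicI) simp

lemma bic_0[simp]: "0 \<in> bic W" by (rule bic_central) simp
lemma bic_1[simp]: "1 \<in> bic W" by (rule bic_central) simp

lemma bic_mult[simp]: "a \<in> bic W \<Longrightarrow> b \<in> bic W \<Longrightarrow> a * b \<in> bic W"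
  apply (rule bicI)
  subgoal for y
    by (metis bicD mult.assoc)
  done

lemma bic_add[simp]: assumes "a \<in> bic W" "b \<in> bic W" shows "a + b \<in> bic W"
proof (rule bicI)
  fix y assume h: "\<And>w. w \<in> W \<Longrightarrow> y * w = w * y"
  have "a * y = y * a" "b * y = y * b" using bicD[OF assms(1) h] bicD[OF assms(2) h] by blast+
  then show "(a + b) * y = y * (a + b)" by (simp add: distrib_left distrib_right)
qed

lemma bic_uminus[simp]: assumes "a \<in> bic W" shows "- a \<in> bic W"
proof (rule bicI)
  fix y assume h: "\<And>w. w \<in> W \<Longrightarrow> y * w = w * y"
  have "a * y = y * a" using bicD[OF assms(1) h] by blast
  then show "(- a) * y = y * (- a)" by simp
qed

lemma bic_diff[simp]: "a \<in> bic W \<Longrightarrow> b \<in> bic W \<Longrightarrow> a - b \<in> bic W"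
  using bic_add[of a W "- b"] by simp

lemma bic_power[simp]: "a \<in> bic W \<Longrightarrow> a ^ n \<in> bic W"
  by (induction n) simp_all

lemma bic_rinv[simp]: assumes "a \<in> bic W" "runit a" shows "rinv a \<in> bic W"
proof (rule bicI)
  fix b assume h: "\<And>w. w \<in> W \<Longrightarrow> b * w = w * b"
  have ab: "a * b = b * a" using bicD[OF assms(1)] h by blast
  have "rinv a * b = rinv a * b * (a * rinv a)" using rinv_r[OF assms(2)] by simp
  also have "\<dots> = rinv a * (a * b) * rinv a" by (simp add: ab mult.assoc)
  also have "\<dots> = b * rinv a" by (simp add: mult.assoc[symmetric] rinv_l[OF assms(2)])
  finally show "rinv a * b = b * rinv a" .
qed

lemma bic_zpow[simp]: "a \<in> bic W \<Longrightarrow> runit a \<Longrightarrow> zpow a n \<in> bic W"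
  unfolding zpow_def by simp

lemma bic_prod_list[simp]: "(\<And>y. y \<in> set ys \<Longrightarrow> y \<in> bic W) \<Longrightarrow> prod_list ys \<in> bic W"
  by (induction ys) simp_all

lemma bic_comm: assumes "pcomm W" "a \<in> bic W" "b \<in> bic W" shows "a * b = b * a"
proof -
  have "\<And>w. w \<in> W \<Longrightarrow> b * w = w * b"
  proof -
    fix w assume "w \<in> W"
    then have "\<And>v. v \<in> W \<Longrightarrow> w * v = v * w" using assms(1) unfolding pcomm_def by metis
    then show "b * w = w * b" using bicD[OF assms(3)] by metis
  qed
  then show ?thesis using bicD[OF assms(2)] by blast
qed

lemma bic_lcomm: assumes "pcomm W" "a \<in> bic W" "b \<in> bic W" shows "a * (b * c) = b * (a * c)"
  by (simp add: mult.assoc[symmetric] bic_comm[OF assms])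

definition MM :: "'a::ring_1 set \<Rightarrow> 'a monoid" where
  "MM W = \<lparr>carrier = bic W, mult = (*), one = 1\<rparr>"

lemma MM_simps[simp]: "carrier (MM W) = bic W" "mult (MM W) = (*)" "one (MM W) = 1"
  by (simp_all add: MM_def)

lemma MM_comm_monoid: "pcomm W \<Longrightarrow> comm_monoid (MM W)"
  by (rule comm_monoidI) (simp_all add: mult.assoc bic_comm)

definition cprod :: "'a::ring_1 set \<Rightarrow> ('b \<Rightarrow> 'a) \<Rightarrow> 'b set \<Rightarrow> 'a" where
  "cprod W f A = finprod (MM W) f A"


lemma cprod_empty[simp]: "pcomm W \<Longrightarrow> cprod W f {} = 1"
proof -
  assume "pcomm W"
  interpret comm_monoid "MM W" using MM_comm_monoid[OF \<open>pcomm W\<close>] .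
  show ?thesis unfolding cprod_def by simp
qed

lemma cprod_closed[simp]: "pcomm W \<Longrightarrow> (\<And>i. i \<in> A \<Longrightarrow> f i \<in> bic W) \<Longrightarrow> cprod W f A \<in> bic W"
proof -
  assume "pcomm W" "\<And>i. i \<in> A \<Longrightarrow> f i \<in> bic W"
  interpret comm_monoid "MM W" using MM_comm_monoid[OF \<open>pcomm W\<close>] .
  have "f \<in> A \<rightarrow> carrier (MM W)" using \<open>\<And>i. i \<in> A \<Longrightarrow> f i \<in> bic W\<close> by auto
  then show ?thesis unfolding cprod_def using finprod_closed by (metis (no_types) MM_simps(1))
qed

lemma cprod_insert:
  assumes "pcomm W" "finite A" "a \<notin> A" "\<And>i. i \<in> insert a A \<Longrightarrow> f i \<in> bic W"
  shows "cprod W f (insert a A) = f a * cprod W f A"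
proof -
  interpret comm_monoid "MM W" using MM_comm_monoid[OF assms(1)] .
  show ?thesis unfolding cprod_def using assms by (subst finprod_insert) auto
qed

lemma cprod_remove:
  assumes "pcomm W" "finite A" "a \<in> A" "\<And>i. i \<in> A \<Longrightarrow> f i \<in> bic W"
  shows "cprod W f A = f a * cprod W f (A - {a})"
proof -
  have "A = insert a (A - {a})" using assms by auto
  then have "cprod W f A = cprod W f (insert a (A - {a}))" by simp
  also have "\<dots> = f a * cprod W f (A - {a})"
    by (rule cprod_insert) (use assms in auto)
  finally show ?thesis .
qed

lemma cprod_mult:
  assumes "pcomm W" "\<And>i. i \<in> A \<Longrightarrow> f i \<in> bic W" "\<And>i. i \<in> A \<Longrightarrow> g i \<in> bic W"
  shows "cprod W (\<lambda>i. f i * g i) A = cprod W f A * cprod W g A"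
proof -
  interpret comm_monoid "MM W" using MM_comm_monoid[OF assms(1)] .
  have "finprod (MM W) (\<lambda>i. f i \<otimes>\<^bsub>MM W\<^esub> g i) A = finprod (MM W) f A \<otimes>\<^bsub>MM W\<^esub> finprod (MM W) g A"
    by (rule finprod_multf) (use assms in auto)
  then show ?thesis unfolding cprod_def by simp
qed

lemma cprod_cong:
  assumes "pcomm W" "A = B" "\<And>i. i \<in> B \<Longrightarrow> f i = g i" "\<And>i. i \<in> B \<Longrightarrow> g i \<in> bic W"
  shows "cprod W f A = cprod W g B"
proof -
  interpret comm_monoid "MM W" using MM_comm_monoid[OF assms(1)] .
  show ?thesis unfolding cprod_def by (rule finprod_cong') (use assms in auto)
qed

lemma cprod_reindex:
  assumes "pcomm W" "inj_on h A" "\<And>i. i \<in> h ` A \<Longrightarrow> f i \<in> bic W"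
  shows "cprod W f (h ` A) = cprod W (\<lambda>i. f (h i)) A"
proof -
  interpret comm_monoid "MM W" using MM_comm_monoid[OF assms(1)] .
  show ?thesis unfolding cprod_def by (rule finprod_reindex) (use assms in auto)
qed

lemma cprod_Un:
  assumes "pcomm W" "finite A" "finite B" "A \<inter> B = {}" "\<And>i. i \<in> A \<union> B \<Longrightarrow> f i \<in> bic W"
  shows "cprod W f (A \<union> B) = cprod W f A * cprod W f B"
proof -
  interpret comm_monoid "MM W" using MM_comm_monoid[OF assms(1)] .
  show ?thesis unfolding cprod_def using finprod_Un_disjoint[of A B f] assms by auto
qed

lemma cprod_const:
  assumes "pcomm W" "finite A" "a \<in> bic W"
  shows "cprod W (\<lambda>i. a) A = a ^ card A"
  using assms(2)
proof (induction A rule: finite_induct)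
  case empty then show ?case using assms(1) by simp
next
  case (insert b A)
  then show ?case using cprod_insert[OF assms(1), of A b "\<lambda>i. a"] assms(3) by simp
qed

lemma cprod_prod_list:
  assumes "pcomm W" "distinct xs" "\<And>i. i \<in> set xs \<Longrightarrow> f i \<in> bic W"
  shows "prod_list (map f xs) = cprod W f (set xs)"
  using assms(2,3)
proof (induction xs)
  case Nil then show ?case using assms(1) by simp
next
  case (Cons a xs)
  then show ?case using cprod_insert[OF assms(1), of "set xs" a f] by simp
qed

lemma cprod_one:
  assumes "pcomm W" "\<And>i. i \<in> A \<Longrightarrow> f i = 1"
  shows "cprod W f A = 1"
proof -
  interpret comm_monoid "MM W" using MM_comm_monoid[OF assms(1)] .
  show ?thesis unfolding cprod_def using finprod_one_eqI[of A f] assms by simp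
qed

lemma cprod_unit:
  assumes "pcomm W" "finite A" "\<And>i. i \<in> A \<Longrightarrow> f i \<in> bic W" "\<And>i. i \<in> A \<Longrightarrow> runit (f i)"
  shows "runit (cprod W f A)"
  using assms(2-)
proof (induction A rule: finite_induct)
  case empty then show ?case using assms(1) by simp
next
  case (insert b A)
  then show ?case using cprod_insert[OF assms(1), of A b f] by (simp add: runit_mult)
qed


lemma qfrak_ne0: "qfrak \<noteq> 0"
proof -
  have "qvar \<noteq> 0" unfolding qvar_def by (simp add: Zero_fract_def eq_fract)
  then show ?thesis unfolding qfrak_def by simp
qed

lemma qfrak_ne1: "1 - qfrak \<noteq> 0"
proof
  assume "1 - qfrak = 0"
  then have "qfrak = 1" by simp
  then have "Fract ([:0, 1:] * [:0, 1:]) 1 = Fract 1 (1::complex poly)"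
    unfolding qfrak_def qvar_def power2_eq_square by (simp add: One_fract_def)
  then have "[:0, 1:] * [:0, 1:] = (1::complex poly)" by (simp add: eq_fract)
  then have "degree ([:0, 1:] * [:0, 1::complex:]) = 0" by simp
  then show False by (simp add: degree_mult_eq)
qed

locale ctx =
  fixes c :: "Cq \<Rightarrow> 'a::ring_1"
    and x G :: "nat \<Rightarrow> 'a"
    and r :: nat
  assumes c_add: "\<And>a b. c (a + b) = c a + c b"
    and c_mult: "\<And>a b. c (a * b) = c a * c b"
    and c_one: "c 1 = 1"
    and c_central: "\<And>a y. c a * y = y * c a"
    and xx_comm: "\<And>i j. i \<in> {1..r+1} \<Longrightarrow> j \<in> {1..r+1} \<Longrightarrow> x i * x j = x j * x i"
    and GG_comm: "\<And>i j. i \<in> {1..r+1} \<Longrightarrow> j \<in> {1..r+1} \<Longrightarrow> G i * G j = G j * G i"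
    and Gx_comm: "\<And>i j. i \<in> {1..r+1} \<Longrightarrow> j \<in> {1..r+1} \<Longrightarrow> i \<noteq> j \<Longrightarrow> G i * x j = x j * G i"
    and Gx_q: "\<And>i. i \<in> {1..r+1} \<Longrightarrow> G i * x i = c qfrak * x i * G i"
    and x_unit: "\<And>i. i \<in> {1..r+1} \<Longrightarrow> runit (x i)"
    and G_unit: "\<And>i. i \<in> {1..r+1} \<Longrightarrow> runit (G i)"
    and loc_unit: "\<And>i j m. i \<in> {1..r+1} \<Longrightarrow> j \<in> {1..r+1} \<Longrightarrow> i \<noteq> j \<Longrightarrow>
                     runit (x i - c (qfrak powi m) * x j)"
begin

definition Vs :: "nat set" where "Vs = {1..r+1}"
definition Vl :: "nat list" where "Vl = [1..<r+2]"
abbreviation "V \<equiv> Vs"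

lemma Vs_iff: "i \<in> Vs \<longleftrightarrow> 1 \<le> i \<and> i \<le> r + 1" unfolding Vs_def by simp
lemma set_Vl: "set Vl = Vs" unfolding Vl_def Vs_def by auto
lemma distinct_Vl: "distinct Vl" unfolding Vl_def by simp
lemma fin_Vs[simp]: "finite Vs" unfolding Vs_def by simp
abbreviation "XW \<equiv> x ` V"
abbreviation "C \<equiv> bic XW"
abbreviation "q \<equiv> c qfrak"

lemma c_zero[simp]: "c 0 = 0"
  using c_add[of 0 0] by simp
lemma c_uminus: "c (- a) = - c a"
  using c_add[of a "- a"] minus_unique[of "c a" "c (- a)"] by simp
lemma c_diff: "c (a - b) = c a - c b"
  using c_add[of a "- b"] c_uminus[of b] by simp
lemma c_power: "c (a ^ n) = c a ^ n"
  by (induction n) (simp_all add: c_one c_mult)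
lemma c_unit: "a \<noteq> 0 \<Longrightarrow> runit (c a)"
  by (rule runitI[of _ "c (inverse a)"]) (simp_all flip: c_mult add: c_one)
lemma c_rinv: "a \<noteq> 0 \<Longrightarrow> rinv (c a) = c (inverse a)"
  by (rule rinv_eq) (simp_all flip: c_mult add: c_one)

lemma c_C[simp]: "c a \<in> bic W"
  by (rule bic_central) (simp add: c_central)

lemma pcomm_XW: "pcomm XW"
  unfolding pcomm_def using xx_comm by (auto simp: Vs_def)
lemma pcomm_GW: "pcomm (G ` V)"
  unfolding pcomm_def using GG_comm by (auto simp: Vs_def)

lemma x_C[simp]: "i \<in> V \<Longrightarrow> x i \<in> C"
  by (rule bic_W[OF pcomm_XW]) simp
lemma G_GC[simp]: "i \<in> V \<Longrightarrow> G i \<in> bic (G ` V)"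
  by (rule bic_W[OF pcomm_GW]) simp

lemma Ccomm: "a \<in> C \<Longrightarrow> b \<in> C \<Longrightarrow> a * b = b * a"
  by (rule bic_comm[OF pcomm_XW])
lemma Clcomm: "a \<in> C \<Longrightarrow> b \<in> C \<Longrightarrow> a * (b * d) = b * (a * d)"
  by (rule bic_lcomm[OF pcomm_XW])

lemma q_unit[simp]: "runit q"
  using c_unit qfrak_ne0 by blast
lemma omq_unit[simp]: "runit (1 - q)"
  using c_unit[OF qfrak_ne1] by (simp add: c_diff c_one)

lemma x_unit'[simp]: "i \<in> V \<Longrightarrow> runit (x i)" using x_unit by (simp add: Vs_def)
lemma G_unit'[simp]: "i \<in> V \<Longrightarrow> runit (G i)" using G_unit by (simp add: Vs_def)
lemma Gx_comm': "i \<in> V \<Longrightarrow> j \<in> V \<Longrightarrow> i \<noteq> j \<Longrightarrow> G i * x j = x j * G i" using Gx_comm by (simp add: Vs_def)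
lemma Gx_q': "i \<in> V \<Longrightarrow> G i * x i = q * x i * G i" using Gx_q by (simp add: Vs_def)
lemma GG_comm': "i \<in> V \<Longrightarrow> j \<in> V \<Longrightarrow> G i * G j = G j * G i" using GG_comm by (simp add: Vs_def)

lemma u_xx[simp]: "i \<in> V \<Longrightarrow> j \<in> V \<Longrightarrow> i \<noteq> j \<Longrightarrow> runit (x i - x j)"
  using loc_unit[of i j 0] by (simp add: c_one Vs_def)
lemma u_xqx[simp]: "i \<in> V \<Longrightarrow> j \<in> V \<Longrightarrow> i \<noteq> j \<Longrightarrow> runit (x i - q * x j)"
  using loc_unit[of i j 1] by (simp add: Vs_def)
lemma u_qxx[simp]: "i \<in> V \<Longrightarrow> j \<in> V \<Longrightarrow> i \<noteq> j \<Longrightarrow> runit (q * x i - x j)"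
  using runit_minus[OF u_xqx[of j i]] by simp
lemma u_qxqx[simp]: "i \<in> V \<Longrightarrow> j \<in> V \<Longrightarrow> i \<noteq> j \<Longrightarrow> runit (q * x i - q * x j)"
  using runit_mult[OF q_unit u_xx[of i j]] by (simp add: right_diff_distrib mult.assoc)
lemma u_xqxi[simp]: "i \<in> V \<Longrightarrow> runit (x i - q * x i)"
  using runit_mult[OF omq_unit x_unit'[of i]] by (simp add: left_diff_distrib)
lemma u_qxxi[simp]: "i \<in> V \<Longrightarrow> runit (q * x i - x i)"
  using runit_minus[OF u_xqxi[of i]] by simp
lemma u_qx[simp]: "i \<in> V \<Longrightarrow> runit (q * x i)"
  using runit_mult[OF q_unit x_unit'[of i]] by simp

end


context
  fixes W :: "'a::ring_1 set" and y :: "'b \<Rightarrow> 'a"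
  assumes pc: "pcomm W"
begin

definition wS :: "'b set \<Rightarrow> 'b \<Rightarrow> 'a" where
  "wS S j = cprod W (\<lambda>l. rinv (y j - y l)) (S - {j})"

definition good :: "'b set \<Rightarrow> bool" where
  "good S \<longleftrightarrow> finite S \<and> (\<forall>j\<in>S. y j \<in> bic W) \<and> (\<forall>j\<in>S. \<forall>l\<in>S. j \<noteq> l \<longrightarrow> runit (y j - y l))"

definition DS :: "'b set \<Rightarrow> nat \<Rightarrow> 'a" where
  "DS S d = (\<Sum>j\<in>S. y j ^ d * wS S j)"

lemma good_sub: "good S \<Longrightarrow> T \<subseteq> S \<Longrightarrow> good T"
  unfolding good_def by (auto intro: finite_subset)

lemma wS_C: "good S \<Longrightarrow> j \<in> S \<Longrightarrow> wS S j \<in> bic W"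
  unfolding wS_def good_def by (intro cprod_closed[OF pc]) auto

lemma wS_remove:
  assumes "good S" "j \<in> S" "m \<in> S" "j \<noteq> m"
  shows "wS S j = rinv (y j - y m) * wS (S - {m}) j"
proof -
  have "wS S j = rinv (y j - y m) * cprod W (\<lambda>l. rinv (y j - y l)) ((S - {j}) - {m})"
    unfolding wS_def using assms unfolding good_def
    by (intro cprod_remove[OF pc]) auto
  moreover have "(S - {j}) - {m} = (S - {m}) - {j}" by auto
  ultimately show ?thesis unfolding wS_def by simp
qed

lemma L1:
  assumes "good S" "m \<in> S"
  shows "(\<Sum>j\<in>S. y j ^ d * ((y j - y m) * wS S j)) = DS (S - {m}) d"
proof -
  have fin: "finite S" using assms unfolding good_def by simp
  have "(\<Sum>j\<in>S. y j ^ d * ((y j - y m) * wS S j))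
      = y m ^ d * ((y m - y m) * wS S m) + (\<Sum>j\<in>S - {m}. y j ^ d * ((y j - y m) * wS S j))"
    using sum.remove[OF fin assms(2)] by blast
  also have "\<dots> = (\<Sum>j\<in>S - {m}. y j ^ d * ((y j - y m) * wS S j))" by simp
  also have "\<dots> = (\<Sum>j\<in>S - {m}. y j ^ d * wS (S - {m}) j)"
  proof (rule sum.cong)
    fix j assume j: "j \<in> S - {m}"
    have u: "runit (y j - y m)" using assms j unfolding good_def by auto
    have "(y j - y m) * wS S j = (y j - y m) * rinv (y j - y m) * wS (S - {m}) j"
      using wS_remove[OF assms(1) _ assms(2)] j by (simp add: mult.assoc)
    also have "\<dots> = wS (S - {m}) j" using rinv_r[OF u] by simp
    finally show "y j ^ d * ((y j - y m) * wS S j) = y j ^ d * wS (S - {m}) j" by simp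
  qed simp
  finally show ?thesis unfolding DS_def .
qed

lemma DD_main:
  "\<forall>S. card S = n \<longrightarrow> good S \<longrightarrow> S \<noteq> {} \<longrightarrow> (\<forall>d. d \<le> n - 1 \<longrightarrow> DS S d = (if d = n - 1 then 1 else 0))"
proof (induction n rule: less_induct)
  case (less n)
  show ?case
  proof (intro allI impI)
    fix S d assume cS: "card S = n" and gS: "good S" and ne: "S \<noteq> {}" and dle: "d \<le> n - 1"
    have fin: "finite S" using gS unfolding good_def by simp
    have n1: "n \<ge> 1" using cS fin ne card_gt_0_iff[of S] by linarith
    have IH: "\<And>T d. T \<subseteq> S \<Longrightarrow> card T < n \<Longrightarrow> T \<noteq> {} \<Longrightarrow> d \<le> card T - 1 \<Longrightarrow>
        DS T d = (if d = card T - 1 then 1 else 0)"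
      using less good_sub[OF gS] by blast
    have yC: "\<And>j. j \<in> S \<Longrightarrow> y j \<in> bic W" using gS unfolding good_def by simp
    have rem: "\<And>m. m \<in> S \<Longrightarrow> n \<ge> 2 \<Longrightarrow> DS (S - {m}) d' = (if d' = n - 2 then 1 else 0)"
      if "d' \<le> n - 2" for d'
    proof -
      fix m assume m: "m \<in> S" and n2: "n \<ge> 2"
      have c1: "card (S - {m}) = n - 1" using cS m fin by simp
      have "S - {m} \<noteq> {}"
      proof
        assume "S - {m} = {}"
        then have "card (S - {m}) = 0" by (simp only: card.empty)
        with c1 n2 show False by simp
      qed
      then show "DS (S - {m}) d' = (if d' = n - 2 then 1 else 0)"
        using IH[of "S - {m}" d'] c1 that n2 by auto
    qed
    show "DS S d = (if d = n - 1 then 1 else 0)"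
      using dle
    proof (induction d)
      case 0
      show ?case
      proof (cases "n = 1")
        case True
        then obtain j where "S = {j}" using cS by (metis card_1_singletonE)
        then show ?thesis using True pc unfolding DS_def wS_def by simp
      next
        case False
        then have n2: "n \<ge> 2" using n1 by simp
        obtain m where m: "m \<in> S" using ne by blast
        have "S - {m} \<noteq> {}"
        proof
          assume "S - {m} = {}"
          then have "card (S - {m}) = 0" by (simp only: card.empty)
          with cS m fin n2 show False by simp
        qed
        then obtain m' where m': "m' \<in> S - {m}" by blast
        have u: "runit (y m' - y m)" using gS m m' unfolding good_def by auto
        have "(y m' - y m) * DS S 0 = (\<Sum>j\<in>S. (y m' - y m) * wS S j)"
          unfolding DS_def by (simp add: sum_distrib_left)
        also have "\<dots> = (\<Sum>j\<in>S. y j ^ 0 * ((y j - y m) * wS S j)) - (\<Sum>j\<in>S. y j ^ 0 * ((y j - y m') * wS S j))"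
          by (simp add: sum_subtractf[symmetric] left_diff_distrib[symmetric])
        also have "\<dots> = DS (S - {m}) 0 - DS (S - {m'}) 0"
          using L1[OF gS m, of 0] L1[OF gS, of m' 0] m' by simp
        also have "\<dots> = 0" using rem[of 0 m] rem[of 0 m'] m m' n2 by simp
        finally have "(y m' - y m) * DS S 0 = 0" .
        then have "rinv (y m' - y m) * ((y m' - y m) * DS S 0) = 0" by simp
        then have "DS S 0 = 0" using rinv_l[OF u] by (simp add: mult.assoc[symmetric])
        then show ?thesis using False n2 by simp
      qed
    next
      case (Suc d')
      have n2: "n \<ge> 2" using Suc.prems by simp
      obtain m where m: "m \<in> S" using ne by blast
      have ih: "DS S d' = 0" using Suc.IH Suc.prems by simp
      have "DS S (Suc d') = (\<Sum>j\<in>S. y j ^ d' * ((y j - y m) * wS S j) + y m * (y j ^ d' * wS S j))"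
        unfolding DS_def
      proof (rule sum.cong)
        fix j assume j: "j \<in> S"
        have a: "y m * y j ^ d' = y j ^ d' * y m"
          using bic_comm[OF pc] yC[OF m] yC[OF j] by simp
        have "y j ^ Suc d' * wS S j = y j ^ d' * ((y j - y m) + y m) * wS S j"
          by (simp add: power_Suc2 del: power_Suc)
        also have "\<dots> = y j ^ d' * ((y j - y m) * wS S j) + (y j ^ d' * y m) * wS S j"
          by (simp add: distrib_left distrib_right mult.assoc left_diff_distrib right_diff_distrib)
        also have "\<dots> = y j ^ d' * ((y j - y m) * wS S j) + y m * (y j ^ d' * wS S j)"
          by (simp add: a[symmetric] mult.assoc)
        finally show "y j ^ Suc d' * wS S j = y j ^ d' * ((y j - y m) * wS S j) + y m * (y j ^ d' * wS S j)" .
      qed simp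
      also have "\<dots> = DS (S - {m}) d' + y m * DS S d'"
        unfolding sum.distrib L1[OF gS m] by (simp add: DS_def sum_distrib_left)
      also have "\<dots> = (if Suc d' = n - 1 then 1 else 0)"
        using rem[of d' m] m n2 Suc.prems ih by auto
      finally show ?case .
    qed
  qed
qed

lemma DD:
  assumes "good S" "S \<noteq> {}" "d \<le> card S - 1"
  shows "(\<Sum>j\<in>S. y j ^ d * cprod W (\<lambda>l. rinv (y j - y l)) (S - {j})) = (if d = card S - 1 then 1 else 0)"
  using DD_main[of "card S"] assms unfolding DS_def wS_def by blast

end


definition moves :: "'a::ring_1 \<Rightarrow> 'a \<Rightarrow> 'a \<Rightarrow> bool" where
  "moves g a a' \<longleftrightarrow> g * a = a' * g"

lemma moves_mult: "moves g a a' \<Longrightarrow> moves g b b' \<Longrightarrow> moves g (a * b) (a' * b')"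
  unfolding moves_def
proof -
  assume "g * a = a' * g" "g * b = b' * g"
  then show "g * (a * b) = a' * b' * g" by (simp flip: mult.assoc) (simp add: mult.assoc)
qed
lemma moves_add: "moves g a a' \<Longrightarrow> moves g b b' \<Longrightarrow> moves g (a + b) (a' + b')"
  unfolding moves_def by (simp add: distrib_left distrib_right)
lemma moves_diff: "moves g a a' \<Longrightarrow> moves g b b' \<Longrightarrow> moves g (a - b) (a' - b')"
  unfolding moves_def by (simp add: left_diff_distrib right_diff_distrib)
lemma moves_one: "moves g 1 1" unfolding moves_def by simp
lemma moves_rinv:
  assumes "moves g u u'" "runit u" "runit u'"
  shows "moves g (rinv u) (rinv u')"
proof -
  have "g * rinv u = (rinv u' * u') * g * rinv u" using rinv_l[OF assms(3)] by simp
  also have "\<dots> = rinv u' * (u' * g) * rinv u" by (simp only: mult.assoc)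
  also have "\<dots> = rinv u' * (g * u) * rinv u" using assms(1) unfolding moves_def by simp
  also have "\<dots> = rinv u' * g * (u * rinv u)" by (simp only: mult.assoc)
  also have "\<dots> = rinv u' * g" using rinv_r[OF assms(2)] by simp
  finally show ?thesis unfolding moves_def .
qed
lemma moves_power: "moves g a a' \<Longrightarrow> moves g (a ^ n) (a' ^ n)"
  by (induction n) (simp_all add: moves_one moves_mult)
lemma moves_zpow: "moves g a a' \<Longrightarrow> runit a \<Longrightarrow> runit a' \<Longrightarrow> moves g (zpow a n) (zpow a' n)"
  unfolding zpow_def by (simp add: moves_power moves_rinv)
lemma moves_prod_list:
  "(\<And>i. i \<in> set xs \<Longrightarrow> moves g (f i) (f' i)) \<Longrightarrow> moves g (prod_list (map f xs)) (prod_list (map f' xs))"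
  by (induction xs) (simp_all add: moves_one moves_mult)
lemma moves_central: "(\<And>y. a * y = y * a) \<Longrightarrow> moves g a a"
  unfolding moves_def by simp

lemma prod_list_compr:
  "prod_list [f i j. i \<leftarrow> xs, j \<leftarrow> ys] = prod_list (map (\<lambda>i. prod_list (map (f i) ys)) xs)"
  by (induction xs) simp_all

context ctx begin

definition phi :: "(nat \<Rightarrow> 'a) \<Rightarrow> nat \<Rightarrow> nat \<Rightarrow> 'a" where
  "phi w a b = w a * rinv (w a - w b)"

definition xs :: "nat set \<Rightarrow> nat \<Rightarrow> 'a" where
  "xs L l = (if l \<in> L then q * x l else x l)"

definition Aw :: "(nat \<Rightarrow> 'a) \<Rightarrow> nat \<Rightarrow> 'a" where
  "Aw w i = prod_list (map (\<lambda>j. phi w i j) (filter (\<lambda>j. j \<noteq> i) Vl))"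

definition Bw :: "(nat \<Rightarrow> 'a) \<Rightarrow> nat set \<Rightarrow> 'a" where
  "Bw w J = prod_list (map (\<lambda>i. prod_list (map (\<lambda>j. phi w i j) (filter (\<lambda>j. j \<notin> J) Vl))) (sorted_list_of_set J))"

definition Xw :: "(nat \<Rightarrow> 'a) \<Rightarrow> int \<Rightarrow> nat set \<Rightarrow> 'a" where
  "Xw w N J = prod_list (map (\<lambda>i. zpow (w i) N) (sorted_list_of_set J))"

definition GL :: "nat set \<Rightarrow> 'a" where
  "GL J = prod_list (map G (sorted_list_of_set J))"

definition wok :: "(nat \<Rightarrow> 'a) \<Rightarrow> bool" where
  "wok w \<longleftrightarrow> (\<forall>l\<in>V. w l \<in> C \<and> runit (w l) \<and> (\<forall>l'\<in>V. l \<noteq> l' \<longrightarrow> runit (w l - w l')))"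

lemma wok_xs: "wok (xs L)"
  unfolding wok_def xs_def by (auto simp: Ccomm)

lemma xs_empty: "xs {} = x"
  unfolding xs_def by auto

lemma wok_x: "wok x"
  using wok_xs[of "{}"] by (simp add: xs_empty)

lemma wokD: "wok w \<Longrightarrow> l \<in> V \<Longrightarrow> w l \<in> C"
  "wok w \<Longrightarrow> l \<in> V \<Longrightarrow> runit (w l)"
  "wok w \<Longrightarrow> l \<in> V \<Longrightarrow> l' \<in> V \<Longrightarrow> l \<noteq> l' \<Longrightarrow> runit (w l - w l')"
  unfolding wok_def by auto

lemma phi_C: "wok w \<Longrightarrow> a \<in> V \<Longrightarrow> b \<in> V \<Longrightarrow> a \<noteq> b \<Longrightarrow> phi w a b \<in> C"
  unfolding phi_def using wokD[of w] by simp

lemma set_filter_ne: "set (filter (\<lambda>j. j \<noteq> i) Vl) = V - {i}"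
  by (auto simp: set_Vl)
lemma set_filter_notin: "set (filter (\<lambda>j. j \<notin> J) Vl) = V - J"
  by (auto simp: set_Vl)
lemma distinct_filter_Vl: "distinct (filter P Vl)"
  by (simp add: distinct_Vl)

lemma Aw_cprod: "wok w \<Longrightarrow> i \<in> V \<Longrightarrow> Aw w i = cprod XW (phi w i) (V - {i})"
proof -
  assume w: "wok w" and i: "i \<in> V"
  have "Aw w i = cprod XW (phi w i) (set (filter (\<lambda>j. j \<noteq> i) Vl))"
    unfolding Aw_def by (rule cprod_prod_list[OF pcomm_XW distinct_filter_Vl]) (use w i in \<open>auto simp: phi_C set_Vl\<close>)
  then show ?thesis by (simp only: set_filter_ne)
qed

lemma Bw_cprod: "wok w \<Longrightarrow> J \<subseteq> V \<Longrightarrow> Bw w J = cprod XW (\<lambda>a. cprod XW (phi w a) (V - J)) J"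
proof -
  assume w: "wok w" and J: "J \<subseteq> V"
  have fin: "finite J" using finite_subset[OF J fin_Vs] .
  have inner: "prod_list (map (phi w a) (filter (\<lambda>j. j \<notin> J) Vl)) = cprod XW (phi w a) (V - J)"
    if a: "a \<in> J" for a
  proof -
    have "prod_list (map (phi w a) (filter (\<lambda>j. j \<notin> J) Vl)) = cprod XW (phi w a) (set (filter (\<lambda>j. j \<notin> J) Vl))"
      by (rule cprod_prod_list[OF pcomm_XW distinct_filter_Vl]) (use w J a in \<open>auto simp: set_Vl intro!: phi_C\<close>)
    then show ?thesis by (simp only: set_filter_notin)
  qed
  have "Bw w J = prod_list (map (\<lambda>a. cprod XW (phi w a) (V - J)) (sorted_list_of_set J))"
    unfolding Bw_def
    by (rule arg_cong[where f=prod_list], rule map_cong[OF refl]) (use inner fin in simp)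
  also have "\<dots> = cprod XW (\<lambda>a. cprod XW (phi w a) (V - J)) (set (sorted_list_of_set J))"
    by (rule cprod_prod_list[OF pcomm_XW]) (use w J fin in \<open>auto intro!: phi_C cprod_closed[OF pcomm_XW]\<close>)
  finally show ?thesis using fin by simp
qed

lemma Xw_cprod: assumes w: "wok w" and J: "J \<subseteq> V" shows "Xw w N J = cprod XW (\<lambda>a. zpow (w a) N) J"
proof -
  have fin: "finite J" using finite_subset[OF J fin_Vs] .
  have "Xw w N J = cprod XW (\<lambda>a. zpow (w a) N) (set (sorted_list_of_set J))"
    unfolding Xw_def
  proof (rule cprod_prod_list[OF pcomm_XW])
    show "distinct (sorted_list_of_set J)" by simp
    fix i assume "i \<in> set (sorted_list_of_set J)"
    then have "i \<in> V" using J fin by auto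
    then show "zpow (w i) N \<in> C" using wokD[OF w] by simp
  qed
  then show ?thesis using fin by simp
qed

lemma GL_cprod: assumes J: "J \<subseteq> V" shows "GL J = cprod (G ` V) G J"
proof -
  have fin: "finite J" using finite_subset[OF J fin_Vs] .
  have "GL J = cprod (G ` V) G (set (sorted_list_of_set J))"
    unfolding GL_def
  proof (rule cprod_prod_list[OF pcomm_GW])
    show "distinct (sorted_list_of_set J)" by simp
    fix i assume "i \<in> set (sorted_list_of_set J)"
    then have "i \<in> V" using J fin by auto
    then show "G i \<in> bic (G ` V)" by simp
  qed
  then show ?thesis using fin by simp
qed

lemma GL_unit: assumes "J \<subseteq> V" shows "runit (GL J)"
proof -
  have "runit (cprod (G ` V) G J)"
    by (rule cprod_unit[OF pcomm_GW]) (use assms finite_subset[OF assms fin_Vs] in \<open>auto intro: G_GC G_unit'\<close>)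
  then show ?thesis using GL_cprod[OF assms] by simp
qed

lemma Xw_C: "wok w \<Longrightarrow> J \<subseteq> V \<Longrightarrow> Xw w N J \<in> C"
  unfolding Xw_cprod by (rule cprod_closed[OF pcomm_XW]) (auto simp: wokD)
lemma Bw_C: "wok w \<Longrightarrow> J \<subseteq> V \<Longrightarrow> Bw w J \<in> C"
  unfolding Bw_cprod by (intro cprod_closed[OF pcomm_XW]) (auto intro!: phi_C)
lemma Aw_C: "wok w \<Longrightarrow> i \<in> V \<Longrightarrow> Aw w i \<in> C"
  unfolding Aw_cprod by (intro cprod_closed[OF pcomm_XW]) (auto simp: phi_C)

lemma G_moves_x: assumes "i \<in> V" "l \<in> V" shows "moves (G i) (x l) (xs {i} l)"
proof (cases "i = l")
  case True
  then show ?thesis unfolding moves_def xs_def using Gx_q'[OF assms(1)] by simp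
next
  case False
  then show ?thesis unfolding moves_def xs_def using Gx_comm'[OF assms False] by simp
qed

lemma Glist_moves_x:
  "distinct ls \<Longrightarrow> set ls \<subseteq> V \<Longrightarrow> l \<in> V \<Longrightarrow> moves (prod_list (map G ls)) (x l) (xs (set ls) l)"
proof (induction ls)
  case Nil then show ?case by (simp add: moves_def xs_def)
next
  case (Cons a ls)
  have a: "a \<in> V" "a \<notin> set ls" using Cons.prems by auto
  have ih: "prod_list (map G ls) * x l = xs (set ls) l * prod_list (map G ls)"
    using Cons unfolding moves_def by auto
  have ga: "G a * x l = xs {a} l * G a" using G_moves_x[OF a(1) Cons.prems(3)] unfolding moves_def .
  have Gq: "G a * q = q * G a" using c_central by simp
  show ?case
  proof (cases "l \<in> set ls")
    case True
    then have la: "l \<noteq> a" using a by auto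
    have ih': "prod_list (map G ls) * x l = q * x l * prod_list (map G ls)" using ih True unfolding xs_def by simp
    have ga': "G a * x l = x l * G a" using ga la unfolding xs_def by simp
    have "prod_list (map G (a # ls)) * x l = G a * (prod_list (map G ls) * x l)" by (simp add: mult.assoc)
    also have "\<dots> = (G a * q) * x l * prod_list (map G ls)" by (simp only: ih' mult.assoc)
    also have "\<dots> = q * (G a * x l) * prod_list (map G ls)" by (simp only: Gq mult.assoc)
    also have "\<dots> = q * x l * (G a * prod_list (map G ls))" by (simp only: ga' mult.assoc)
    also have "\<dots> = xs (set (a # ls)) l * prod_list (map G (a # ls))" using True unfolding xs_def by simp
    finally show ?thesis unfolding moves_def .
  next
    case False
    have ih': "prod_list (map G ls) * x l = x l * prod_list (map G ls)" using ih False unfolding xs_def by simp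
    have "prod_list (map G (a # ls)) * x l = G a * (prod_list (map G ls) * x l)" by (simp add: mult.assoc)
    also have "\<dots> = (G a * x l) * prod_list (map G ls)" by (simp only: ih' mult.assoc)
    also have "\<dots> = xs {a} l * (G a * prod_list (map G ls))" by (simp only: ga mult.assoc)
    also have "\<dots> = xs (set (a # ls)) l * prod_list (map G (a # ls))" using False unfolding xs_def by simp
    finally show ?thesis unfolding moves_def .
  qed
qed

lemma GL_moves_x: "J \<subseteq> V \<Longrightarrow> l \<in> V \<Longrightarrow> moves (GL J) (x l) (xs J l)"
  unfolding GL_def using Glist_moves_x[of "sorted_list_of_set J" l] finite_subset[of J V] by auto

lemma moves_phi:
  assumes "\<And>l. l \<in> V \<Longrightarrow> moves g (x l) (w l)" "wok w" "a \<in> V" "b \<in> V" "a \<noteq> b"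
  shows "moves g (phi x a b) (phi w a b)"
  unfolding phi_def using assms wokD[OF assms(2)]
  by (intro moves_mult moves_rinv moves_diff) auto

lemma moves_Aw:
  assumes "\<And>l. l \<in> V \<Longrightarrow> moves g (x l) (w l)" "wok w" "i \<in> V"
  shows "moves g (Aw x i) (Aw w i)"
  unfolding Aw_def using assms by (intro moves_prod_list moves_phi) (auto simp: set_Vl)

lemma moves_Bw:
  assumes "\<And>l. l \<in> V \<Longrightarrow> moves g (x l) (w l)" "wok w" "J \<subseteq> V"
  shows "moves g (Bw x J) (Bw w J)"
  unfolding Bw_def using assms finite_subset[of J V]
  by (intro moves_prod_list moves_phi) (auto simp: set_Vl)

lemma moves_Xw:
  assumes "\<And>l. l \<in> V \<Longrightarrow> moves g (x l) (w l)" "wok w" "J \<subseteq> V"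
  shows "moves g (Xw x N J) (Xw w N J)"
  unfolding Xw_def using assms finite_subset[of J V] wokD[OF assms(2)]
  by (intro moves_prod_list moves_zpow) auto

end


lemma zpow_add_nat: assumes "runit a" shows "zpow a (m + int n) = zpow a m * a ^ n"
proof (induction n)
  case 0 then show ?case by simp
next
  case (Suc n)
  have step: "zpow a (k + 1) = zpow a k * a" for k
  proof (cases "k \<ge> 0")
    case True
    then have "nat (k + 1) = Suc (nat k)" by simp
    then show ?thesis using True unfolding zpow_def by (simp add: power_Suc2 del: power_Suc)
  next
    case False
    then have k1: "nat (- k) = Suc (nat (- (k + 1)))" by simp
    have "zpow a k * a = rinv a ^ nat (- (k + 1)) * (rinv a * a)"
      using False unfolding zpow_def by (simp only: if_False k1 power_Suc2 mult.assoc)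
    also have "\<dots> = zpow a (k + 1)" using False rinv_l[OF assms] unfolding zpow_def by simp
    finally show ?thesis by simp
  qed
  have "zpow a (m + int (Suc n)) = zpow a ((m + int n) + 1)" by (simp add: algebra_simps)
  also have "\<dots> = zpow a m * a ^ n * a" using step Suc by simp
  finally show ?case by (simp add: power_Suc2 mult.assoc del: power_Suc)
qed

context ctx begin

lemma Ccomm_power: "a \<in> C \<Longrightarrow> b \<in> C \<Longrightarrow> (a * b) ^ n = a ^ n * b ^ n"
proof (induction n)
  case 0 then show ?case by simp
next
  case (Suc n)
  then show ?case by (simp add: mult.assoc Ccomm Clcomm)
qed

lemma zpow_mult_C:
  assumes "a \<in> C" "b \<in> C" "runit a" "runit b"
  shows "zpow (a * b) n = zpow a n * zpow b n"
proof (cases "n \<ge> 0")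
  case True then show ?thesis unfolding zpow_def using Ccomm_power assms by simp
next
  case False
  have "rinv (a * b) = rinv a * rinv b"
    using rinv_mult[OF assms(3,4)] Ccomm[of "rinv b" "rinv a"] assms by simp
  then show ?thesis using False unfolding zpow_def using Ccomm_power assms by simp
qed

lemma q_C[simp]: "q \<in> C" by simp

lemma zpow_qx: "i \<in> V \<Longrightarrow> zpow (q * x i) n = zpow q n * zpow (x i) n"
  by (rule zpow_mult_C) simp_all

lemma xs_C[simp]: "l \<in> V \<Longrightarrow> xs L l \<in> C"
  using wokD(1)[OF wok_xs] by blast
lemma xs_unit[simp]: "l \<in> V \<Longrightarrow> runit (xs L l)"
  using wokD(2)[OF wok_xs] by blast

lemma rinv_C[simp]: "a \<in> C \<Longrightarrow> runit a \<Longrightarrow> rinv a \<in> C" by simp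

lemma phi_qq:
  assumes "a \<in> V" "b \<in> V" "a \<noteq> b"
  shows "q * x a * rinv (q * x a - q * x b) = x a * rinv (x a - x b)"
proof -
  have e: "q * x a - q * x b = q * (x a - x b)" by (simp add: right_diff_distrib)
  have "rinv (q * x a - q * x b) = rinv (x a - x b) * rinv q"
    unfolding e using rinv_mult[OF q_unit u_xx[OF assms]] .
  moreover have "q * rinv q = 1" using rinv_r[OF q_unit] .
  moreover have "rinv (x a - x b) \<in> C" "rinv q \<in> C" using assms by simp_all
  moreover have "q * x a * (rinv (x a - x b) * rinv q) = (q * rinv q) * (x a * rinv (x a - x b))"
    using assms by (simp add: mult.assoc Ccomm Clcomm)
  ultimately show ?thesis by simp
qed


lemma cprodC[simp]: "(\<And>i. i \<in> A \<Longrightarrow> f i \<in> C) \<Longrightarrow> cprod XW f A \<in> C"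
  by (rule cprod_closed[OF pcomm_XW])

lemma phiC[simp]: "a \<in> V \<Longrightarrow> b \<in> V \<Longrightarrow> a \<noteq> b \<Longrightarrow> phi (xs L) a b \<in> C"
  by (rule phi_C[OF wok_xs])
lemma phixC[simp]: "a \<in> V \<Longrightarrow> b \<in> V \<Longrightarrow> a \<noteq> b \<Longrightarrow> phi x a b \<in> C"
  by (rule phi_C[OF wok_x])

lemma Aw_split:
  assumes w: "wok w" and i: "i \<in> V" and AB: "A \<union> B = V - {i}" "A \<inter> B = {}"
  shows "Aw w i = cprod XW (phi w i) A * cprod XW (phi w i) B"
proof -
  have fA: "finite A" "finite B" using AB finite_subset[OF _ fin_Vs] by blast+
  have "Aw w i = cprod XW (phi w i) (A \<union> B)" using Aw_cprod[OF w i] AB by simp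
  also have "\<dots> = cprod XW (phi w i) A * cprod XW (phi w i) B"
  proof (rule cprod_Un[OF pcomm_XW fA AB(2)])
    fix j assume "j \<in> A \<union> B"
    then have "j \<in> V" "j \<noteq> i" using AB by auto
    then show "phi w i j \<in> C" using phi_C[OF w i] by simp
  qed
  finally show ?thesis .
qed

lemma Bw_split:
  assumes w: "wok w" and J: "J \<subseteq> V" and i: "i \<in> J"
  shows "Bw w J = cprod XW (phi w i) (V - J) * cprod XW (\<lambda>a. cprod XW (phi w a) (V - J)) (J - {i})"
proof -
  have fJ: "finite J" using finite_subset[OF J fin_Vs] .
  show ?thesis unfolding Bw_cprod[OF w J]
  proof (rule cprod_remove[OF pcomm_XW fJ i])
    fix a assume "a \<in> J"
    then show "cprod XW (phi w a) (V - J) \<in> C" using J phi_C[OF w] by (intro cprodC) auto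
  qed
qed

lemma Xw_split:
  assumes w: "wok w" and J: "J \<subseteq> V" and i: "i \<in> J"
  shows "Xw w N J = zpow (w i) N * cprod XW (\<lambda>a. zpow (w a) N) (J - {i})"
proof -
  have fJ: "finite J" using finite_subset[OF J fin_Vs] .
  show ?thesis unfolding Xw_cprod[OF w J]
  proof (rule cprod_remove[OF pcomm_XW fJ i])
    fix a assume "a \<in> J"
    then show "zpow (w a) N \<in> C" using J wokD[OF w] by auto
  qed
qed

lemma cprod_congC:
  assumes "\<And>i. i \<in> A \<Longrightarrow> f i = g i" "\<And>i. i \<in> A \<Longrightarrow> g i \<in> C"
  shows "cprod XW f A = cprod XW g A"
  using cprod_cong[OF pcomm_XW refl assms] .

definition T :: "int \<Rightarrow> nat set \<Rightarrow> 'a" where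
  "T N J = Xw x N J * Bw x J * GL J"

definition U :: "int \<Rightarrow> nat \<Rightarrow> 'a" where
  "U p i = zpow (x i) p * Aw x i * G i"

lemma moves_GL_zA:
  assumes "J \<subseteq> V" "i \<in> V"
  shows "moves (GL J) (zpow (x i) p * Aw x i) (zpow (xs J i) p * Aw (xs J) i)"
proof (rule moves_mult)
  show "moves (GL J) (zpow (x i) p) (zpow (xs J i) p)"
    using GL_moves_x[OF assms] assms by (intro moves_zpow) auto
  show "moves (GL J) (Aw x i) (Aw (xs J) i)"
    using GL_moves_x[OF assms(1)] by (intro moves_Aw wok_xs assms(2))
qed

lemma moves_G_XB:
  assumes "J \<subseteq> V" "i \<in> V"
  shows "moves (G i) (Xw x N J * Bw x J) (Xw (xs {i}) N J * Bw (xs {i}) J)"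
proof (rule moves_mult)
  show "moves (G i) (Xw x N J) (Xw (xs {i}) N J)"
    using G_moves_x[OF assms(2)] by (intro moves_Xw wok_xs assms(1))
  show "moves (G i) (Bw x J) (Bw (xs {i}) J)"
    using G_moves_x[OF assms(2)] by (intro moves_Bw wok_xs assms(1))
qed

lemma TU_expand:
  assumes "J \<subseteq> V" "i \<in> V"
  shows "T N J * U p i = (Xw x N J * Bw x J * (zpow (xs J i) p * Aw (xs J) i)) * (GL J * G i)"
proof -
  have m: "GL J * (zpow (x i) p * Aw x i) = (zpow (xs J i) p * Aw (xs J) i) * GL J"
    using moves_GL_zA[OF assms] unfolding moves_def .
  have "T N J * U p i = Xw x N J * Bw x J * (GL J * (zpow (x i) p * Aw x i)) * G i"
    unfolding T_def U_def by (simp only: mult.assoc)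
  also have "\<dots> = Xw x N J * Bw x J * ((zpow (xs J i) p * Aw (xs J) i) * GL J) * G i"
    by (simp only: m)
  finally show ?thesis by (simp only: mult.assoc)
qed

lemma UT_expand:
  assumes "J \<subseteq> V" "i \<in> V"
  shows "U p i * T N J = (zpow (x i) p * Aw x i * (Xw (xs {i}) N J * Bw (xs {i}) J)) * (G i * GL J)"
proof -
  have m: "G i * (Xw x N J * Bw x J) = (Xw (xs {i}) N J * Bw (xs {i}) J) * G i"
    using moves_G_XB[OF assms] unfolding moves_def .
  have "U p i * T N J = zpow (x i) p * Aw x i * (G i * (Xw x N J * Bw x J)) * GL J"
    unfolding T_def U_def by (simp only: mult.assoc)
  also have "\<dots> = zpow (x i) p * Aw x i * ((Xw (xs {i}) N J * Bw (xs {i}) J) * G i) * GL J"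
    by (simp only: m)
  finally show ?thesis by (simp only: mult.assoc)
qed

lemma GL_GC: assumes "J \<subseteq> V" shows "GL J \<in> bic (G ` V)"
proof -
  have "cprod (G ` V) G J \<in> bic (G ` V)"
    by (rule cprod_closed[OF pcomm_GW]) (use assms in auto)
  then show ?thesis using GL_cprod[OF assms] by simp
qed

lemma GL_G_comm: "J \<subseteq> V \<Longrightarrow> i \<in> V \<Longrightarrow> GL J * G i = G i * GL J"
  using bic_comm[OF pcomm_GW GL_GC G_GC] by blast

end

context ctx begin

lemma xs_single_other: "a \<noteq> i \<Longrightarrow> xs {i} a = x a" unfolding xs_def by simp
lemma xs_in: "a \<in> L \<Longrightarrow> xs L a = q * x a" unfolding xs_def by simp
lemma xs_out: "a \<notin> L \<Longrightarrow> xs L a = x a" unfolding xs_def by simp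

lemma cancel_in:
  assumes J: "J \<subseteq> V" and k: "card J = k" and i: "i \<in> J" and p: "p = N + int k + 1"
  shows "T N J * U p i = c (qfrak ^ (k + 1)) * (U p i * T N J)"
proof -
  have iV: "i \<in> V" using J i by auto
  define Xr where "Xr = cprod XW (\<lambda>a. zpow (x a) N) (J - {i})"
  define Pj where "Pj = cprod XW (\<lambda>a. cprod XW (phi x a) (V - J)) (J - {i})"
  define \<alpha> where "\<alpha> = cprod XW (phi x i) (V - J)"
  define \<beta> where "\<beta> = cprod XW (phi x i) (J - {i})"
  define \<gamma> where "\<gamma> = cprod XW (phi (xs {i}) i) (V - J)"
  have X: "Xw x N J = zpow (x i) N * Xr" unfolding Xr_def by (rule Xw_split[OF wok_x J i])
  have X': "Xw (xs {i}) N J = zpow (q * x i) N * Xr"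
  proof -
    have "Xw (xs {i}) N J = zpow (xs {i} i) N * cprod XW (\<lambda>a. zpow (xs {i} a) N) (J - {i})"
      by (rule Xw_split[OF wok_xs J i])
    also have "cprod XW (\<lambda>a. zpow (xs {i} a) N) (J - {i}) = Xr"
      unfolding Xr_def using J by (intro cprod_congC) (auto simp: xs_single_other)
    finally show ?thesis by (simp add: xs_in)
  qed
  have B: "Bw x J = \<alpha> * Pj" unfolding \<alpha>_def Pj_def by (rule Bw_split[OF wok_x J i])
  have B': "Bw (xs {i}) J = \<gamma> * Pj"
  proof -
    have "Bw (xs {i}) J = \<gamma> * cprod XW (\<lambda>a. cprod XW (phi (xs {i}) a) (V - J)) (J - {i})"
      unfolding \<gamma>_def by (rule Bw_split[OF wok_xs J i])
    also have "cprod XW (\<lambda>a. cprod XW (phi (xs {i}) a) (V - J)) (J - {i}) = Pj"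
      unfolding Pj_def
    proof (rule cprod_congC)
      fix a assume a: "a \<in> J - {i}"
      show "cprod XW (phi (xs {i}) a) (V - J) = cprod XW (phi x a) (V - J)"
      proof (rule cprod_congC)
        fix b assume b: "b \<in> V - J"
        then have "a \<noteq> i" "b \<noteq> i" "a \<noteq> b" "a \<in> V" "b \<in> V" using a i J by auto
        then show "phi (xs {i}) a b = phi x a b" "phi x a b \<in> C" by (simp_all add: phi_def xs_single_other)
      qed
      show "cprod XW (phi x a) (V - J) \<in> C" using a J by (auto intro!: cprodC phixC)
    qed
    finally show ?thesis .
  qed
  have AB: "(J - {i}) \<union> (V - J) = V - {i}" "(J - {i}) \<inter> (V - J) = {}" using J i by auto
  have A: "Aw x i = \<beta> * \<alpha>" unfolding \<alpha>_def \<beta>_def by (rule Aw_split[OF wok_x iV AB])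
  have A': "Aw (xs J) i = \<beta> * \<gamma>"
  proof -
    have "Aw (xs J) i = cprod XW (phi (xs J) i) (J - {i}) * cprod XW (phi (xs J) i) (V - J)"
      by (rule Aw_split[OF wok_xs iV AB])
    also have "cprod XW (phi (xs J) i) (J - {i}) = \<beta>"
      unfolding \<beta>_def
    proof (rule cprod_congC)
      fix b assume b: "b \<in> J - {i}"
      then have bb: "b \<in> V" "i \<noteq> b" "b \<in> J" using J by auto
      show "phi (xs J) i b = phi x i b" using phi_qq[OF iV bb(1,2)] bb(3) i by (simp add: phi_def xs_in)
      show "phi x i b \<in> C" using bb iV by (intro phixC)
    qed
    also have "cprod XW (phi (xs J) i) (V - J) = \<gamma>"
      unfolding \<gamma>_def
    proof (rule cprod_congC)
      fix b assume b: "b \<in> V - J"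
      then have bb: "b \<in> V" "i \<noteq> b" "b \<notin> J" using J i by auto
      show "phi (xs J) i b = phi (xs {i}) i b" using bb i by (simp add: phi_def xs_in xs_out)
      show "phi (xs {i}) i b \<in> C" using bb iV by (intro phiC)
    qed
    finally show ?thesis .
  qed
  have zq: "zpow (q * x i) n = zpow q n * zpow (x i) n" for n using zpow_qx[OF iV] .
  have pp: "p = N + int (k + 1)" using p by simp
  have zqp: "zpow q p = zpow q N * q ^ (k + 1)"
    unfolding pp by (rule zpow_add_nat[OF q_unit])
  have Q: "c (qfrak ^ (k + 1)) = q ^ (k + 1)" by (rule c_power)
  have mem: "zpow (x i) N \<in> C" "Xr \<in> C" "\<alpha> \<in> C" "Pj \<in> C" "zpow q N \<in> C" "q ^ (k+1) \<in> C"
    "zpow (x i) p \<in> C" "\<beta> \<in> C" "\<gamma> \<in> C"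
    unfolding Xr_def Pj_def \<alpha>_def \<beta>_def \<gamma>_def using iV J i
    by (auto intro!: cprodC phixC phiC)
  have core: "Xw x N J * Bw x J * (zpow (xs J i) p * Aw (xs J) i)
      = c (qfrak ^ (k + 1)) * (zpow (x i) p * Aw x i * (Xw (xs {i}) N J * Bw (xs {i}) J))"
    unfolding X X' B B' A A' Q xs_in[OF i] zq zqp using mem
    by (simp add: mult.assoc Ccomm Clcomm)
  have "T N J * U p i = (Xw x N J * Bw x J * (zpow (xs J i) p * Aw (xs J) i)) * (GL J * G i)"
    by (rule TU_expand[OF J iV])
  also have "\<dots> = c (qfrak ^ (k + 1)) * (zpow (x i) p * Aw x i * (Xw (xs {i}) N J * Bw (xs {i}) J)) * (G i * GL J)"
    unfolding core GL_G_comm[OF J iV] ..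
  also have "\<dots> = c (qfrak ^ (k + 1)) * (U p i * T N J)"
    unfolding UT_expand[OF J iV] by (simp only: mult.assoc)
  finally show ?thesis .
qed

end


lemma cprod_pairs:
  assumes pc: "pcomm W" and fin: "finite A" "finite B"
    and hC: "\<And>s. s \<in> (A \<times> {False}) \<union> (B \<times> {True}) \<Longrightarrow> h s \<in> bic W"
  shows "cprod W h ((A \<times> {False}) \<union> (B \<times> {True})) = cprod W (\<lambda>b. h (b, False)) A * cprod W (\<lambda>b. h (b, True)) B"
proof -
  have e1: "A \<times> {False} = (\<lambda>b. (b, False)) ` A" and e2: "B \<times> {True} = (\<lambda>b. (b, True)) ` B" by auto
  have "cprod W h ((A \<times> {False}) \<union> (B \<times> {True})) = cprod W h (A \<times> {False}) * cprod W h (B \<times> {True})"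
    by (rule cprod_Un[OF pc]) (use fin hC in auto)
  also have "cprod W h (A \<times> {False}) = cprod W (\<lambda>b. h (b, False)) A"
    unfolding e1 by (rule cprod_reindex[OF pc]) (use hC in \<open>auto simp: inj_on_def\<close>)
  also have "cprod W h (B \<times> {True}) = cprod W (\<lambda>b. h (b, True)) B"
    unfolding e2 by (rule cprod_reindex[OF pc]) (use hC in \<open>auto simp: inj_on_def\<close>)
  finally show ?thesis .
qed

context ctx begin

definition yy :: "nat \<times> bool \<Rightarrow> 'a" where
  "yy s = (if snd s then q * x (fst s) else x (fst s))"

lemma yy_simps[simp]: "yy (a, False) = x a" "yy (a, True) = q * x a"
  unfolding yy_def by simp_all

lemma good_yy: assumes K: "K \<subseteq> V" shows "good XW yy (K \<times> UNIV)"
  unfolding good_def[OF pcomm_XW]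
proof (intro conjI ballI impI)
  show "finite (K \<times> (UNIV :: bool set))" using finite_subset[OF K fin_Vs] by simp
  fix s assume s: "s \<in> K \<times> (UNIV :: bool set)"
  obtain a b where ab: "s = (a, b)" by (cases s)
  have a: "a \<in> V" using s ab K by auto
  show "yy s \<in> C" using a ab by (cases b) simp_all
  fix t assume t: "t \<in> K \<times> (UNIV :: bool set)" and st: "s \<noteq> t"
  obtain a' b' where ab': "t = (a', b')" by (cases t)
  have a': "a' \<in> V" using t ab' K by auto
  show "runit (yy s - yy t)"
  proof (cases "a = a'")
    case True
    then have "b \<noteq> b'" using st ab ab' by auto
    then show ?thesis using True ab ab' a by (cases b; cases b') simp_all
  next
    case False
    then show ?thesis using ab ab' a a' by (cases b; cases b') simp_all
  qed
qed

lemma DD_yy: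
  assumes K: "K \<subseteq> V" "card K = Suc k"
  shows "(\<Sum>a\<in>K. x a ^ (2*k+1) * cprod XW (\<lambda>l. rinv (x a - yy l)) (K \<times> UNIV - {(a, False)})
             + (q * x a) ^ (2*k+1) * cprod XW (\<lambda>l. rinv (q * x a - yy l)) (K \<times> UNIV - {(a, True)})) = 1"
proof -
  have fK: "finite K" using finite_subset[OF K(1) fin_Vs] .
  have cS: "card (K \<times> (UNIV :: bool set)) = 2 * k + 2" using K(2) by (simp add: card_cartesian_product)
  have ne: "K \<times> (UNIV :: bool set) \<noteq> {}" using K(2) by auto
  have "(\<Sum>s\<in>K \<times> UNIV. yy s ^ (2*k+1) * cprod XW (\<lambda>l. rinv (yy s - yy l)) (K \<times> UNIV - {s})) = 1"
    using DD[OF pcomm_XW good_yy[OF K(1)] ne, of "2*k+1"] cS by simp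
  moreover have "(\<Sum>s\<in>K \<times> UNIV. yy s ^ (2*k+1) * cprod XW (\<lambda>l. rinv (yy s - yy l)) (K \<times> UNIV - {s}))
      = (\<Sum>a\<in>K. \<Sum>b\<in>UNIV. yy (a, b) ^ (2*k+1) * cprod XW (\<lambda>l. rinv (yy (a, b) - yy l)) (K \<times> UNIV - {(a, b)}))"
    by (simp add: sum.cartesian_product)
  moreover have "\<dots> = (\<Sum>a\<in>K. x a ^ (2*k+1) * cprod XW (\<lambda>l. rinv (x a - yy l)) (K \<times> UNIV - {(a, False)})
             + (q * x a) ^ (2*k+1) * cprod XW (\<lambda>l. rinv (q * x a - yy l)) (K \<times> UNIV - {(a, True)}))"
    by (simp add: UNIV_bool add.commute)
  ultimately show ?thesis by simp
qed

end

context ctx begin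

definition om :: 'a where "om = c (1 - qfrak)"

lemma om_C[simp]: "om \<in> bic W" unfolding om_def by simp
lemma om_x: "om * x a = x a - q * x a" unfolding om_def by (simp add: c_diff c_one left_diff_distrib)
lemma mone_pow_C[simp]: "(- 1) ^ k \<in> bic W" by simp

lemma cprod_mult_C:
  assumes "\<And>b. b \<in> A \<Longrightarrow> f b \<in> C" "\<And>b. b \<in> A \<Longrightarrow> g b \<in> C"
  shows "cprod XW (\<lambda>b. f b * g b) A = cprod XW f A * cprod XW g A"
  by (rule cprod_mult[OF pcomm_XW assms])

lemma cprod_const_C:
  assumes "finite A" "a \<in> C"
  shows "cprod XW (\<lambda>b. a) A = a ^ card A"
  by (rule cprod_const[OF pcomm_XW assms])

lemma u_xqx_any[simp]: "a \<in> V \<Longrightarrow> b \<in> V \<Longrightarrow> runit (x a - q * x b)"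
  by (cases "a = b") simp_all
lemma u_qxx_any[simp]: "a \<in> V \<Longrightarrow> b \<in> V \<Longrightarrow> runit (q * x a - x b)"
  by (cases "a = b") simp_all

lemma per_a:
  assumes K: "K \<subseteq> V" "card K = Suc k" and a: "a \<in> K"
  shows "x a ^ (k+1) * (cprod XW (\<lambda>b. phi x b a) (K-{a}) * cprod XW (\<lambda>b. x a * rinv (x a - q * x b)) (K-{a}))
        - q^(k+1) * (x a ^ (k+1) * (cprod XW (phi x a) (K-{a}) * cprod XW (\<lambda>b. x b * rinv (x b - q * x a)) (K-{a})))
      = ((- 1) ^ k * om) * cprod XW x K *
         (x a ^ (2*k+1) * cprod XW (\<lambda>l. rinv (x a - yy l)) (K \<times> UNIV - {(a, False)})
             + (q * x a) ^ (2*k+1) * cprod XW (\<lambda>l. rinv (q * x a - yy l)) (K \<times> UNIV - {(a, True)}))"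
proof -
  have fK: "finite K" using finite_subset[OF K(1) fin_Vs] .
  have aV: "a \<in> V" using a K by auto
  define Ka where "Ka = K - {a}"
  have fKa: "finite Ka" using fK unfolding Ka_def by simp
  have cKa: "card Ka = k" using K(2) a fK unfolding Ka_def by simp
  have KaV: "\<And>b. b \<in> Ka \<Longrightarrow> b \<in> V" "\<And>b. b \<in> Ka \<Longrightarrow> a \<noteq> b" "\<And>b. b \<in> Ka \<Longrightarrow> b \<noteq> a"
    using K unfolding Ka_def by auto
  define R1 where "R1 = cprod XW (\<lambda>b. rinv (x a - x b)) Ka"
  define R2 where "R2 = cprod XW (\<lambda>b. rinv (x a - q * x b)) Ka"
  define R3 where "R3 = cprod XW (\<lambda>b. rinv (q * x a - x b)) Ka"
  define P1 where "P1 = cprod XW x Ka"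
  have mem: "R1 \<in> C" "R2 \<in> C" "R3 \<in> C" "P1 \<in> C"
    unfolding R1_def R2_def R3_def P1_def using KaV aV by (auto intro!: cprodC)
  have F1: "cprod XW (\<lambda>b. phi x b a) Ka = (- 1) ^ k * (P1 * R1)"
  proof -
    have "cprod XW (\<lambda>b. phi x b a) Ka = cprod XW (\<lambda>b. x b * ((- 1) * rinv (x a - x b))) Ka"
    proof (rule cprod_congC)
      fix b assume "b \<in> Ka"
      then have b: "b \<in> V" "b \<noteq> a" using KaV by auto
      have "x b - x a = - (x a - x b)" by simp
      then have "rinv (x b - x a) = - rinv (x a - x b)" using rinv_minus[OF u_xx[OF aV b(1)]] b by simp
      then show "phi x b a = x b * ((- 1) * rinv (x a - x b))" unfolding phi_def by simp
      show "x b * ((- 1) * rinv (x a - x b)) \<in> C" using b aV by simp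
    qed
    also have "\<dots> = P1 * cprod XW (\<lambda>b. (- 1) * rinv (x a - x b)) Ka"
      unfolding P1_def using KaV aV
      by (intro cprod_mult_C[of Ka x "\<lambda>b. (- 1) * rinv (x a - x b)"]) simp_all
    also have "cprod XW (\<lambda>b. (- 1) * rinv (x a - x b)) Ka = cprod XW (\<lambda>b. - 1) Ka * R1"
      unfolding R1_def using KaV aV
      by (intro cprod_mult_C[of Ka "\<lambda>b. - 1" "\<lambda>b. rinv (x a - x b)"]) simp_all
    finally have "cprod XW (\<lambda>b. phi x b a) Ka = P1 * (cprod XW (\<lambda>b. - 1) Ka * R1)" .
    then show ?thesis
      using cprod_const_C[OF fKa, of "- 1"] cKa mem by (simp add: mult.assoc Ccomm Clcomm)
  qed
  have F2: "cprod XW (\<lambda>b. x a * rinv (x a - q * x b)) Ka = x a ^ k * R2"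
  proof -
    have "cprod XW (\<lambda>b. x a * rinv (x a - q * x b)) Ka = cprod XW (\<lambda>b. x a) Ka * R2"
      unfolding R2_def using KaV aV
      by (intro cprod_mult_C[of Ka "\<lambda>b. x a" "\<lambda>b. rinv (x a - q * x b)"]) simp_all
    then show ?thesis using cprod_const_C[OF fKa, of "x a"] cKa aV by simp
  qed
  have F3: "cprod XW (phi x a) Ka = x a ^ k * R1"
  proof -
    have "cprod XW (phi x a) Ka = cprod XW (\<lambda>b. x a * rinv (x a - x b)) Ka"
      using KaV aV by (intro cprod_congC) (simp_all add: phi_def)
    also have "\<dots> = cprod XW (\<lambda>b. x a) Ka * R1"
      unfolding R1_def using KaV aV
      by (intro cprod_mult_C[of Ka "\<lambda>b. x a" "\<lambda>b. rinv (x a - x b)"]) simp_all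
    finally show ?thesis using cprod_const_C[OF fKa, of "x a"] cKa aV by simp
  qed
  have F4: "cprod XW (\<lambda>b. x b * rinv (x b - q * x a)) Ka = (- 1) ^ k * (P1 * R3)"
  proof -
    have "cprod XW (\<lambda>b. x b * rinv (x b - q * x a)) Ka = cprod XW (\<lambda>b. x b * ((- 1) * rinv (q * x a - x b))) Ka"
    proof (rule cprod_congC)
      fix b assume "b \<in> Ka"
      then have b: "b \<in> V" "a \<noteq> b" using KaV by auto
      have "x b - q * x a = - (q * x a - x b)" by simp
      then have "rinv (x b - q * x a) = - rinv (q * x a - x b)" using rinv_minus[OF u_qxx[OF aV b(1,2)]] by simp
      then show "x b * rinv (x b - q * x a) = x b * ((- 1) * rinv (q * x a - x b))" by simp
      show "x b * ((- 1) * rinv (q * x a - x b)) \<in> C" using b aV by simp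
    qed
    also have "\<dots> = P1 * cprod XW (\<lambda>b. (- 1) * rinv (q * x a - x b)) Ka"
      unfolding P1_def using KaV aV
      by (intro cprod_mult_C[of Ka x "\<lambda>b. (- 1) * rinv (q * x a - x b)"]) simp_all
    also have "cprod XW (\<lambda>b. (- 1) * rinv (q * x a - x b)) Ka = cprod XW (\<lambda>b. - 1) Ka * R3"
      unfolding R3_def using KaV aV
      by (intro cprod_mult_C[of Ka "\<lambda>b. - 1" "\<lambda>b. rinv (q * x a - x b)"]) simp_all
    finally have "cprod XW (\<lambda>b. x b * rinv (x b - q * x a)) Ka = P1 * (cprod XW (\<lambda>b. - 1) Ka * R3)" .
    then show ?thesis
      using cprod_const_C[OF fKa, of "- 1"] cKa mem by (simp add: mult.assoc Ccomm Clcomm)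
  qed
  have F5: "cprod XW (\<lambda>b. rinv (q * x a - q * x b)) Ka = rinv q ^ k * R1"
  proof -
    have "cprod XW (\<lambda>b. rinv (q * x a - q * x b)) Ka = cprod XW (\<lambda>b. rinv q * rinv (x a - x b)) Ka"
    proof (rule cprod_congC)
      fix b assume "b \<in> Ka"
      then have b: "b \<in> V" "a \<noteq> b" using KaV by auto
      have e: "q * x a - q * x b = q * (x a - x b)" by (simp add: right_diff_distrib)
      have "rinv (q * x a - q * x b) = rinv (x a - x b) * rinv q"
        unfolding e using rinv_mult[OF q_unit u_xx[OF aV b]] .
      then show "rinv (q * x a - q * x b) = rinv q * rinv (x a - x b)" using b aV by (simp add: Ccomm)
      show "rinv q * rinv (x a - x b) \<in> C" using b aV by simp
    qed
    also have "\<dots> = cprod XW (\<lambda>b. rinv q) Ka * R1"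
      unfolding R1_def using KaV aV
      by (intro cprod_mult_C[of Ka "\<lambda>b. rinv q" "\<lambda>b. rinv (x a - x b)"]) simp_all
    finally show ?thesis using cprod_const_C[OF fKa, of "rinv q"] cKa by simp
  qed
  have F6: "cprod XW x K = x a * P1"
    unfolding P1_def Ka_def by (rule cprod_remove[OF pcomm_XW fK a]) (use K in auto)
  have tF: "cprod XW (\<lambda>l. rinv (x a - yy l)) (K \<times> UNIV - {(a, False)}) = R1 * (rinv (x a - q * x a) * R2)"
  proof -
    have e: "K \<times> UNIV - {(a, False)} = (Ka \<times> {False}) \<union> (K \<times> {True})" unfolding Ka_def by auto
    have "cprod XW (\<lambda>l. rinv (x a - yy l)) (K \<times> UNIV - {(a, False)})
        = cprod XW (\<lambda>b. rinv (x a - yy (b, False))) Ka * cprod XW (\<lambda>b. rinv (x a - yy (b, True))) K"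
      unfolding e
    proof (rule cprod_pairs[OF pcomm_XW fKa fK])
      fix s assume s: "s \<in> Ka \<times> {False} \<union> K \<times> {True}"
      obtain b t where bt: "s = (b, t)" by (cases s)
      show "rinv (x a - yy s) \<in> C"
      proof (cases t)
        case True
        then have "b \<in> V" using s bt K by auto
        then show ?thesis using aV bt True by (cases "a = b") simp_all
      next
        case False
        then have "b \<in> Ka" using s bt by auto
        then show ?thesis using aV bt False KaV by simp
      qed
    qed
    also have "cprod XW (\<lambda>b. rinv (x a - yy (b, False))) Ka = R1" unfolding R1_def by simp
    also have "cprod XW (\<lambda>b. rinv (x a - yy (b, True))) K = rinv (x a - q * x a) * R2"
      unfolding R2_def Ka_def yy_simps
      by (rule cprod_remove[OF pcomm_XW fK a]) (use K aV in \<open>auto intro!: rinv_C\<close>)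
    finally show ?thesis .
  qed
  have tT: "cprod XW (\<lambda>l. rinv (q * x a - yy l)) (K \<times> UNIV - {(a, True)}) = (rinv (q * x a - x a) * R3) * (rinv q ^ k * R1)"
  proof -
    have e: "K \<times> UNIV - {(a, True)} = (K \<times> {False}) \<union> (Ka \<times> {True})" unfolding Ka_def by auto
    have "cprod XW (\<lambda>l. rinv (q * x a - yy l)) (K \<times> UNIV - {(a, True)})
        = cprod XW (\<lambda>b. rinv (q * x a - yy (b, False))) K * cprod XW (\<lambda>b. rinv (q * x a - yy (b, True))) Ka"
      unfolding e
    proof (rule cprod_pairs[OF pcomm_XW fK fKa])
      fix s assume s: "s \<in> K \<times> {False} \<union> Ka \<times> {True}"
      obtain b t where bt: "s = (b, t)" by (cases s)
      show "rinv (q * x a - yy s) \<in> C"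
      proof (cases t)
        case False
        then have "b \<in> V" using s bt K by auto
        then show ?thesis using aV bt False by (cases "a = b") simp_all
      next
        case True
        then have "b \<in> Ka" using s bt by auto
        then show ?thesis using aV bt True KaV by simp
      qed
    qed
    also have "cprod XW (\<lambda>b. rinv (q * x a - yy (b, True))) Ka = rinv q ^ k * R1" using F5 by simp
    also have "cprod XW (\<lambda>b. rinv (q * x a - yy (b, False))) K = rinv (q * x a - x a) * R3"
      unfolding R3_def Ka_def yy_simps
      by (rule cprod_remove[OF pcomm_XW fK a]) (use K aV in \<open>auto intro!: rinv_C\<close>)
    finally show ?thesis .
  qed
  define z where "z = x a ^ k"
  define w where "w = q ^ k"
  define v where "v = rinv q ^ k"
  define e1 where "e1 = rinv (x a - q * x a)"
  define e2 where "e2 = rinv (q * x a - x a)"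
  define sg where "sg = ((- 1) ^ k :: 'a)"
  have mem2: "x a \<in> C" "z \<in> C" "w \<in> C" "v \<in> C" "e1 \<in> C" "e2 \<in> C" "sg \<in> C" "q \<in> C" "om \<in> C"
    unfolding z_def w_def v_def e1_def e2_def sg_def using aV by simp_all
  have p1: "x a ^ (k+1) = x a * z" unfolding z_def by simp
  have p2: "x a ^ (2*k+1) = x a * (z * z)" unfolding z_def by (simp add: mult_2 power_add)
  have p3: "(q * x a) ^ (2*k+1) = (q * (w * w)) * (x a * (z * z))"
    unfolding z_def w_def using Ccomm_power[of q "x a" "2*k+1"] aV by (simp add: mult_2 power_add)
  have p4: "q ^ (k+1) = q * w" unfolding w_def by simp
  have vw: "v * w = 1"
  proof -
    have "v * w = (rinv q * q) ^ k" unfolding v_def w_def using Ccomm_power[of "rinv q" q k] by simp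
    then show ?thesis using rinv_l[OF q_unit] by simp
  qed
  have ce1: "om * x a * e1 = 1" unfolding e1_def om_x using rinv_r[OF u_xqxi[OF aV]] .
  have ce2: "om * x a * e2 = - 1"
  proof -
    have h: "om * x a = - (q * x a - x a)" unfolding om_x by simp
    have "om * x a * e2 = - ((q * x a - x a) * e2)" by (simp only: h minus_mult_left)
    then show ?thesis unfolding e2_def using rinv_r[OF u_qxxi[OF aV]] by simp
  qed
  define M1 where "M1 = sg * (P1 * (x a * (z * (z * (R1 * R2)))))"
  define M2 where "M2 = sg * (q * (w * (P1 * (x a * (z * (z * (R3 * R1)))))))"
  have part1: "x a ^ (k+1) * (cprod XW (\<lambda>b. phi x b a) Ka * cprod XW (\<lambda>b. x a * rinv (x a - q * x b)) Ka)
      = (sg * om) * cprod XW x K * (x a ^ (2*k+1) * (R1 * (e1 * R2)))"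
  proof -
    have l: "x a ^ (k+1) * (cprod XW (\<lambda>b. phi x b a) Ka * cprod XW (\<lambda>b. x a * rinv (x a - q * x b)) Ka) = M1"
      unfolding F1 F2 p1 M1_def sg_def[symmetric] z_def[symmetric] using mem mem2 by (simp add: mult.assoc Ccomm Clcomm)
    have r: "(sg * om) * cprod XW x K * (x a ^ (2*k+1) * (R1 * (e1 * R2))) = (om * x a * e1) * M1"
      unfolding F6 p2 M1_def using mem mem2 by (simp add: mult.assoc Ccomm Clcomm)
    show ?thesis unfolding l r ce1 by simp
  qed
  have part2: "- (q^(k+1) * (x a ^ (k+1) * (cprod XW (phi x a) Ka * cprod XW (\<lambda>b. x b * rinv (x b - q * x a)) Ka)))
      = (sg * om) * cprod XW x K * ((q * x a) ^ (2*k+1) * ((e2 * R3) * (v * R1)))"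
  proof -
    have l: "q^(k+1) * (x a ^ (k+1) * (cprod XW (phi x a) Ka * cprod XW (\<lambda>b. x b * rinv (x b - q * x a)) Ka)) = M2"
      unfolding F3 F4 p1 p4 M2_def sg_def[symmetric] z_def[symmetric] using mem mem2 by (simp add: mult.assoc Ccomm Clcomm)
    have r: "(sg * om) * cprod XW x K * ((q * x a) ^ (2*k+1) * ((e2 * R3) * (v * R1))) = (om * x a * e2) * ((v * w) * M2)"
      unfolding F6 p3 M2_def using mem mem2 by (simp add: mult.assoc Ccomm Clcomm)
    show ?thesis unfolding l r ce2 vw by simp
  qed
  have "x a ^ (k+1) * (cprod XW (\<lambda>b. phi x b a) Ka * cprod XW (\<lambda>b. x a * rinv (x a - q * x b)) Ka)
        - q^(k+1) * (x a ^ (k+1) * (cprod XW (phi x a) Ka * cprod XW (\<lambda>b. x b * rinv (x b - q * x a)) Ka))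
      = (sg * om) * cprod XW x K * (x a ^ (2*k+1) * (R1 * (e1 * R2)) + (q * x a) ^ (2*k+1) * ((e2 * R3) * (v * R1)))"
    (is "?A - ?B = ?X * (?Y + ?Z)")
  proof -
    have "?A - ?B = ?A + (- ?B)" by (rule diff_conv_add_uminus)
    also have "\<dots> = ?X * ?Y + ?X * ?Z" by (simp only: part1 part2)
    also have "\<dots> = ?X * (?Y + ?Z)" by (rule distrib_left[symmetric])
    finally show ?thesis .
  qed
  then show ?thesis unfolding tF tT Ka_def e1_def e2_def v_def sg_def .
qed

end

context ctx begin

definition Lsum :: "nat set \<Rightarrow> nat \<Rightarrow> nat \<Rightarrow> 'a" where
  "Lsum K k a = x a ^ (k+1) * (cprod XW (\<lambda>b. phi x b a) (K-{a}) * cprod XW (\<lambda>b. x a * rinv (x a - q * x b)) (K-{a}))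
        - q^(k+1) * (x a ^ (k+1) * (cprod XW (phi x a) (K-{a}) * cprod XW (\<lambda>b. x b * rinv (x b - q * x a)) (K-{a})))"

lemma IK:
  assumes K: "K \<subseteq> V" "card K = Suc k"
  shows "(\<Sum>a\<in>K. Lsum K k a) = ((- 1) ^ k * om) * cprod XW x K"
proof -
  have "(\<Sum>a\<in>K. Lsum K k a) = (\<Sum>a\<in>K. ((- 1) ^ k * om) * cprod XW x K *
         (x a ^ (2*k+1) * cprod XW (\<lambda>l. rinv (x a - yy l)) (K \<times> UNIV - {(a, False)})
             + (q * x a) ^ (2*k+1) * cprod XW (\<lambda>l. rinv (q * x a - yy l)) (K \<times> UNIV - {(a, True)})))"
    unfolding Lsum_def by (rule sum.cong[OF refl]) (rule per_a[OF K])
  also have "\<dots> = ((- 1) ^ k * om) * cprod XW x K * 1"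
    unfolding sum_distrib_left[symmetric] DD_yy[OF K] ..
  finally show ?thesis by simp
qed

lemma GL_remove: assumes "K \<subseteq> V" "i \<in> K" shows "GL (K - {i}) * G i = GL K"
proof -
  have fK: "finite K" using finite_subset[OF assms(1) fin_Vs] .
  have "GL K = G i * cprod (G ` V) G (K - {i})"
    unfolding GL_cprod[OF assms(1)] by (rule cprod_remove[OF pcomm_GW fK assms(2)]) (use assms in auto)
  also have "cprod (G ` V) G (K - {i}) = GL (K - {i})"
  proof -
    have "K - {i} \<subseteq> V" using assms(1) by blast
    then show ?thesis using GL_cprod[of "K - {i}"] by simp
  qed
  finally show ?thesis using GL_G_comm[of "K - {i}" i] assms by auto
qed

lemma Bw_remove_split:
  assumes w: "wok w" and K: "K \<subseteq> V" and i: "i \<in> K"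
  shows "Bw w (K - {i}) = cprod XW (\<lambda>a. phi w a i) (K - {i}) * cprod XW (\<lambda>a. cprod XW (phi w a) (V - K)) (K - {i})"
proof -
  have fK: "finite K" using finite_subset[OF K fin_Vs] .
  have J: "K - {i} \<subseteq> V" using K by auto
  have iV: "i \<in> V" using K i by auto
  have "Bw w (K - {i}) = cprod XW (\<lambda>a. cprod XW (phi w a) (V - (K - {i}))) (K - {i})" by (rule Bw_cprod[OF w J])
  also have "\<dots> = cprod XW (\<lambda>a. phi w a i * cprod XW (phi w a) (V - K)) (K - {i})"
  proof (rule cprod_congC)
    fix a assume a: "a \<in> K - {i}"
    then have aV: "a \<in> V" "a \<noteq> i" using K by auto
    have e: "(V - (K - {i})) - {i} = V - K" using i by auto
    have "cprod XW (phi w a) (V - (K - {i})) = phi w a i * cprod XW (phi w a) ((V - (K - {i})) - {i})"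
      by (rule cprod_remove[OF pcomm_XW]) (use iV a K in \<open>auto intro!: phi_C[OF w]\<close>)
    then show "cprod XW (phi w a) (V - (K - {i})) = phi w a i * cprod XW (phi w a) (V - K)" unfolding e .
    show "phi w a i * cprod XW (phi w a) (V - K) \<in> C" using aV iV a K by (auto intro!: bic_mult phi_C[OF w] cprodC)
  qed
  also have "\<dots> = cprod XW (\<lambda>a. phi w a i) (K - {i}) * cprod XW (\<lambda>a. cprod XW (phi w a) (V - K)) (K - {i})"
    by (rule cprod_mult_C) (use iV K in \<open>auto intro!: phi_C[OF w] cprodC\<close>)
  finally show ?thesis .
qed


lemma term_i:
  assumes K: "K \<subseteq> V" "card K = Suc k" and i: "i \<in> K" and p: "p = N + int k + 1"
  shows "T N (K - {i}) * U p i - c (qfrak ^ (k+1)) * (U p i * T N (K - {i}))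
       = (Xw x N K * Bw x K * Lsum K k i) * GL K"
proof -
  define J where "J = K - {i}"
  have fK: "finite K" using finite_subset[OF K(1) fin_Vs] .
  have JV: "J \<subseteq> V" using K unfolding J_def by auto
  have iV: "i \<in> V" using K i by auto
  have iJ: "i \<notin> J" unfolding J_def by simp
  have fJ: "finite J" using fK unfolding J_def by simp
  have cJ: "card J = k" using K(2) i fK unfolding J_def by simp
  have JK: "\<And>b. b \<in> J \<Longrightarrow> b \<in> V" "\<And>b. b \<in> J \<Longrightarrow> b \<noteq> i" "\<And>b. b \<in> J \<Longrightarrow> i \<noteq> b" "\<And>b. b \<in> J \<Longrightarrow> b \<in> K"
    using K unfolding J_def by auto
  have VK: "\<And>b. b \<in> V - K \<Longrightarrow> b \<noteq> i" "\<And>b. b \<in> V - K \<Longrightarrow> i \<noteq> b" "\<And>b. b \<in> V - K \<Longrightarrow> b \<notin> J"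
    using i unfolding J_def by auto
  define XJ where "XJ = Xw x N J"
  define Pk where "Pk = cprod XW (\<lambda>a. cprod XW (phi x a) (V - K)) J"
  define \<alpha> where "\<alpha> = cprod XW (phi x i) (V - K)"
  define f1 where "f1 = cprod XW (\<lambda>a. phi x a i) J"
  define f2 where "f2 = cprod XW (\<lambda>b. x i * rinv (x i - q * x b)) J"
  define f3 where "f3 = cprod XW (phi x i) J"
  define f4 where "f4 = cprod XW (\<lambda>b. x b * rinv (x b - q * x i)) J"
  define zN where "zN = zpow (x i) N"
  define xk where "xk = x i ^ (k+1)"
  have mem: "XJ \<in> C" "Pk \<in> C" "\<alpha> \<in> C" "f1 \<in> C" "f2 \<in> C" "f3 \<in> C" "f4 \<in> C" "zN \<in> C" "xk \<in> C"
    unfolding XJ_def Pk_def \<alpha>_def f1_def f2_def f3_def f4_def zN_def xk_def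
    using JV iV JK K i by (auto intro!: Xw_C[OF wok_x] cprodC phixC bic_mult simp: u_xqx_any)
  have XK: "Xw x N K = zN * XJ"
  proof -
    have "Xw x N K = zN * cprod XW (\<lambda>a. zpow (x a) N) J"
      unfolding zN_def J_def by (rule Xw_split[OF wok_x K(1) i])
    then show ?thesis unfolding XJ_def Xw_cprod[OF wok_x JV] .
  qed
  have zp: "zpow (x i) p = zN * xk"
  proof -
    have pp: "p = N + int (k + 1)" using p by simp
    show ?thesis unfolding pp zN_def xk_def by (rule zpow_add_nat) (use iV in simp)
  qed
  have BJ: "Bw x J = f1 * Pk" unfolding J_def f1_def Pk_def by (rule Bw_remove_split[OF wok_x K(1) i])
  have BK: "Bw x K = \<alpha> * Pk" unfolding \<alpha>_def Pk_def J_def by (rule Bw_split[OF wok_x K(1) i])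
  have AB: "J \<union> (V - K) = V - {i}" "J \<inter> (V - K) = {}" using K i unfolding J_def by auto
  have AJ: "Aw (xs J) i = f2 * \<alpha>"
  proof -
    have "Aw (xs J) i = cprod XW (phi (xs J) i) J * cprod XW (phi (xs J) i) (V - K)"
      by (rule Aw_split[OF wok_xs iV AB])
    also have "cprod XW (phi (xs J) i) J = f2" unfolding f2_def
    proof (rule cprod_congC)
      fix b assume b: "b \<in> J"
      show "phi (xs J) i b = x i * rinv (x i - q * x b)" using b iJ by (simp add: phi_def xs_in xs_out)
      show "x i * rinv (x i - q * x b) \<in> C" using iV JK(1)[OF b] by simp
    qed
    also have "cprod XW (phi (xs J) i) (V - K) = \<alpha>" unfolding \<alpha>_def
    proof (rule cprod_congC)
      fix b assume b: "b \<in> V - K"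
      show "phi (xs J) i b = phi x i b" using iJ VK(3)[OF b] by (simp add: phi_def xs_out)
      show "phi x i b \<in> C" using b iV VK(2)[OF b] by simp
    qed
    finally show ?thesis .
  qed
  have A: "Aw x i = f3 * \<alpha>" unfolding f3_def \<alpha>_def by (rule Aw_split[OF wok_x iV AB])
  have XJ': "Xw (xs {i}) N J = XJ"
    unfolding XJ_def Xw_cprod[OF wok_x JV] Xw_cprod[OF wok_xs JV]
    by (intro cprod_congC) (use JK(1,2) in \<open>simp_all add: xs_single_other\<close>)
  have BJ': "Bw (xs {i}) J = f4 * Pk"
  proof -
    have "Bw (xs {i}) J = cprod XW (\<lambda>a. phi (xs {i}) a i) J * cprod XW (\<lambda>a. cprod XW (phi (xs {i}) a) (V - K)) J"
      unfolding J_def by (rule Bw_remove_split[OF wok_xs K(1) i])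
    also have "cprod XW (\<lambda>a. phi (xs {i}) a i) J = f4" unfolding f4_def
    proof (rule cprod_congC)
      fix b assume b: "b \<in> J"
      show "phi (xs {i}) b i = x b * rinv (x b - q * x i)" using JK(2)[OF b] by (simp add: phi_def xs_in xs_single_other)
      show "x b * rinv (x b - q * x i) \<in> C" using iV JK(1)[OF b] by simp
    qed
    also have "cprod XW (\<lambda>a. cprod XW (phi (xs {i}) a) (V - K)) J = Pk" unfolding Pk_def
    proof (rule cprod_congC)
      fix a assume a: "a \<in> J"
      show "cprod XW (phi (xs {i}) a) (V - K) = cprod XW (phi x a) (V - K)"
      proof (rule cprod_congC)
        fix b assume b: "b \<in> V - K"
        then have "a \<noteq> b" using a JK(4)[OF a] by blast
        moreover have "a \<noteq> i" "b \<noteq> i" "a \<in> V" "b \<in> V" using JK(2)[OF a] VK(1)[OF b] JK(1)[OF a] b by auto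
        ultimately show "phi (xs {i}) a b = phi x a b" "phi x a b \<in> C"
          by (simp_all add: phi_def xs_single_other)
      qed
      show "cprod XW (phi x a) (V - K) \<in> C" using JK(1)[OF a] JK(4)[OF a] by (auto intro!: cprodC phixC)
    qed
    finally show ?thesis .
  qed
  have xsJi: "xs J i = x i" using iJ by (simp add: xs_out)
  have Q: "c (qfrak ^ (k + 1)) = q ^ (k + 1)" by (rule c_power)
  define M where "M = Xw x N K * Bw x K"
  have MC: "M \<in> C" unfolding M_def using K by (simp add: Xw_C[OF wok_x] Bw_C[OF wok_x])
  have c1: "Xw x N J * Bw x J * (zpow (xs J i) p * Aw (xs J) i) = M * (xk * (f1 * f2))"
    unfolding M_def XK BK xsJi zp AJ BJ XJ_def[symmetric] using mem by (simp add: mult.assoc Ccomm Clcomm)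
  have c2: "zpow (x i) p * Aw x i * (Xw (xs {i}) N J * Bw (xs {i}) J) = M * (xk * (f3 * f4))"
    unfolding M_def XK BK zp A XJ' BJ' using mem by (simp add: mult.assoc Ccomm Clcomm)
  have L: "Lsum K k i = xk * (f1 * f2) - q ^ (k+1) * (xk * (f3 * f4))"
    unfolding Lsum_def xk_def f1_def f2_def f3_def f4_def J_def ..
  have GK1: "GL J * G i = GL K" unfolding J_def by (rule GL_remove[OF K(1) i])
  have GK2: "G i * GL J = GL K" using GK1 GL_G_comm[OF JV iV] by simp
  have "T N J * U p i - c (qfrak ^ (k+1)) * (U p i * T N J)
      = M * (xk * (f1 * f2)) * GL K - q ^ (k+1) * (M * (xk * (f3 * f4)) * GL K)"
    unfolding TU_expand[OF JV iV] UT_expand[OF JV iV] c1 c2 GK1 GK2 Q ..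
  also have "\<dots> = (M * (xk * (f1 * f2)) - q ^ (k+1) * (M * (xk * (f3 * f4)))) * GL K"
    by (simp add: left_diff_distrib mult.assoc)
  also have "M * (xk * (f1 * f2)) - q ^ (k+1) * (M * (xk * (f3 * f4))) = M * Lsum K k i"
    unfolding L right_diff_distrib using mem MC by (simp add: mult.assoc Ccomm Clcomm)
  finally show ?thesis unfolding M_def J_def .
qed

end

context ctx begin

definition Pk :: "nat \<Rightarrow> nat set set" where
  "Pk k = {J. J \<subseteq> V \<and> card J = k}"

definition S :: "nat \<Rightarrow> int \<Rightarrow> 'a" where
  "S k N = (\<Sum>J\<in>Pk k. T N J)"

definition E :: "int \<Rightarrow> 'a" where
  "E p = (\<Sum>i\<in>V. U p i)"

lemma fin_Pk: "finite (Pk k)"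
proof -
  have "Pk k \<subseteq> Pow V" unfolding Pk_def by auto
  moreover have "finite (Pow V)" by simp
  ultimately show ?thesis by (rule finite_subset)
qed

lemma Xw_succ: assumes K: "K \<subseteq> V" shows "Xw x (N + 1) K = Xw x N K * cprod XW x K"
proof -
  have "Xw x (N + 1) K = cprod XW (\<lambda>a. zpow (x a) N * x a) K"
    unfolding Xw_cprod[OF wok_x K]
  proof (rule cprod_congC)
    fix a assume a: "a \<in> K"
    then have aV: "a \<in> V" using K by auto
    show "zpow (x a) (N + 1) = zpow (x a) N * x a" using zpow_add_nat[of "x a" N 1] aV by simp
    show "zpow (x a) N * x a \<in> C" using aV by simp
  qed
  also have "\<dots> = Xw x N K * cprod XW x K"
    unfolding Xw_cprod[OF wok_x K] by (rule cprod_mult_C) (use K in auto)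
  finally show ?thesis .
qed

lemma perK:
  assumes K: "K \<subseteq> V" "card K = Suc k" and p: "p = N + int k + 1"
  shows "(\<Sum>i\<in>K. T N (K - {i}) * U p i - c (qfrak ^ (k+1)) * (U p i * T N (K - {i})))
       = ((- 1) ^ k * om) * T (N + 1) K"
proof -
  have "(\<Sum>i\<in>K. T N (K - {i}) * U p i - c (qfrak ^ (k+1)) * (U p i * T N (K - {i})))
      = (\<Sum>i\<in>K. (Xw x N K * Bw x K * Lsum K k i) * GL K)"
    by (rule sum.cong[OF refl]) (rule term_i[OF K _ p])
  also have "\<dots> = Xw x N K * Bw x K * (\<Sum>i\<in>K. Lsum K k i) * GL K"
    by (simp add: sum_distrib_left sum_distrib_right)
  also have "\<dots> = Xw x N K * Bw x K * (((- 1) ^ k * om) * cprod XW x K) * GL K"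
    unfolding IK[OF K] ..
  also have "Xw x N K * Bw x K * (((- 1) ^ k * om) * cprod XW x K) = ((- 1) ^ k * om) * (Xw x (N + 1) K * Bw x K)"
  proof -
    have m: "Xw x N K \<in> C" "Bw x K \<in> C" "cprod XW x K \<in> C"
      using K(1) by (auto intro!: Xw_C[OF wok_x] Bw_C[OF wok_x] cprodC)
    show ?thesis unfolding Xw_succ[OF K(1)] using m by (simp add: mult.assoc Ccomm Clcomm)
  qed
  finally show ?thesis unfolding T_def by (simp add: mult.assoc)
qed

lemma key:
  assumes p: "p = N + int k + 1"
  shows "S k N * E p - c (qfrak ^ (k+1)) * (E p * S k N) = ((- 1) ^ k * om) * S (k + 1) (N + 1)"
proof -
  define Q where "Q = c (qfrak ^ (k+1))"
  define F where "F J i = T N J * U p i - Q * (U p i * T N J)" for J i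
  have "S k N * E p - Q * (E p * S k N) = (\<Sum>J\<in>Pk k. \<Sum>i\<in>V. F J i)"
  proof -
    have a: "S k N * E p = (\<Sum>J\<in>Pk k. \<Sum>i\<in>V. T N J * U p i)" unfolding S_def E_def by (rule sum_product)
    have b: "E p * S k N = (\<Sum>J\<in>Pk k. \<Sum>i\<in>V. U p i * T N J)"
      unfolding S_def E_def sum_product by (rule sum.swap)
    show ?thesis unfolding a b F_def by (simp add: sum_subtractf sum_distrib_left)
  qed
  also have "\<dots> = (\<Sum>J\<in>Pk k. \<Sum>i\<in>V - J. F J i)"
  proof (rule sum.cong[OF refl])
    fix J assume J: "J \<in> Pk k"
    then have JV: "J \<subseteq> V" and cJ: "card J = k" unfolding Pk_def by auto
    have "(\<Sum>i\<in>V. F J i) = (\<Sum>i\<in>J. F J i) + (\<Sum>i\<in>V - J. F J i)"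
      using sum.subset_diff[OF JV fin_Vs, of "F J"] by (simp add: add.commute)
    moreover have "(\<Sum>i\<in>J. F J i) = 0"
      by (rule sum.neutral) (use cancel_in[OF JV cJ _ p] in \<open>simp add: F_def Q_def\<close>)
    ultimately show "(\<Sum>i\<in>V. F J i) = (\<Sum>i\<in>V - J. F J i)" by simp
  qed
  also have "\<dots> = (\<Sum>(J, i)\<in>Sigma (Pk k) (\<lambda>J. V - J). F J i)"
    by (rule sum.Sigma) (simp_all add: fin_Pk)
  also have "\<dots> = (\<Sum>(K, i)\<in>Sigma (Pk (k+1)) (\<lambda>K. K). F (K - {i}) i)"
  proof (rule sum.reindex_bij_witness[where i = "\<lambda>(K, i). (K - {i}, i)" and j = "\<lambda>(J, i). (insert i J, i)"])
    fix a assume a: "a \<in> Sigma (Pk k) (\<lambda>J. V - J)"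
    obtain J i where ai: "a = (J, i)" by (cases a)
    have J: "J \<subseteq> V" "card J = k" "i \<in> V" "i \<notin> J" using a ai unfolding Pk_def by auto
    have fJ: "finite J" using finite_subset[OF J(1) fin_Vs] .
    show "(case (case a of (J, i) \<Rightarrow> (insert i J, i)) of (K, i) \<Rightarrow> (K - {i}, i)) = a" using ai J by auto
    show "(case a of (J, i) \<Rightarrow> (insert i J, i)) \<in> Sigma (Pk (k + 1)) (\<lambda>K. K)"
      using ai J fJ unfolding Pk_def by auto
    show "(case (case a of (J, i) \<Rightarrow> (insert i J, i)) of (K, i) \<Rightarrow> F (K - {i}) i) = (case a of (J, i) \<Rightarrow> F J i)"
      using ai J by auto
  next
    fix b assume b: "b \<in> Sigma (Pk (k + 1)) (\<lambda>K. K)"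
    obtain K i where bi: "b = (K, i)" by (cases b)
    have K: "K \<subseteq> V" "card K = k + 1" "i \<in> K" using b bi unfolding Pk_def by auto
    have fK: "finite K" using finite_subset[OF K(1) fin_Vs] .
    show "(case (case b of (K, i) \<Rightarrow> (K - {i}, i)) of (J, i) \<Rightarrow> (insert i J, i)) = b" using bi K by auto
    show "(case b of (K, i) \<Rightarrow> (K - {i}, i)) \<in> Sigma (Pk k) (\<lambda>J. V - J)"
      using bi K fK unfolding Pk_def by auto
  qed
  also have "\<dots> = (\<Sum>K\<in>Pk (k+1). \<Sum>i\<in>K. F (K - {i}) i)"
  proof (rule sum.Sigma[symmetric])
    show "finite (Pk (k+1))" by (rule fin_Pk)
    show "\<forall>K\<in>Pk (k + 1). finite K"
    proof
      fix K assume "K \<in> Pk (k + 1)"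
      then have "K \<subseteq> V" unfolding Pk_def by simp
      then show "finite K" using finite_subset[OF _ fin_Vs] by blast
    qed
  qed
  also have "\<dots> = (\<Sum>K\<in>Pk (k+1). ((- 1) ^ k * om) * T (N + 1) K)"
  proof (rule sum.cong[OF refl])
    fix K assume "K \<in> Pk (k+1)"
    then have K: "K \<subseteq> V" "card K = Suc k" unfolding Pk_def by auto
    show "(\<Sum>i\<in>K. F (K - {i}) i) = ((- 1) ^ k * om) * T (N + 1) K"
      unfolding F_def Q_def by (rule perK[OF K p])
  qed
  also have "\<dots> = ((- 1) ^ k * om) * S (k + 1) (N + 1)"
    unfolding S_def by (simp add: sum_distrib_left)
  finally show ?thesis unfolding Q_def .
qed

end

context ctx begin

lemma S1: "S 1 N = E N"
proof -
  have P1: "Pk 1 = (\<lambda>i. {i}) ` V"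
    unfolding Pk_def by (auto simp: card_1_singleton_iff)
  have "S 1 N = (\<Sum>i\<in>V. T N {i})"
    unfolding S_def P1 by (subst sum.reindex) (auto simp: inj_on_def)
  also have "\<dots> = E N" unfolding E_def
  proof (rule sum.cong[OF refl])
    fix i assume i: "i \<in> V"
    have f: "filter (\<lambda>j. j \<notin> {i}) Vl = filter (\<lambda>j. j \<noteq> i) Vl" by (rule filter_cong) auto
    show "T N {i} = U N i"
      unfolding T_def U_def Xw_def Bw_def GL_def Aw_def f by simp
  qed
  finally show ?thesis .
qed

lemma E_rhoE: "rhoE r x G = E"
  unfolding rhoE_def E_def U_def Aw_def phi_def Vs_def Vl_def by (rule ext) simp

lemma c_sign_om: "(- 1) ^ k * om = c ((- 1) ^ k * (1 - qfrak))"
  unfolding om_def by (simp add: c_mult c_power c_uminus c_one)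

lemma Yaux_S:
  assumes "1 \<le> j"
  shows "Yaux c E k n j = c ((- 1) ^ (j * (j - 1) div 2) * (1 - qfrak) ^ (j - 1)) * S j (n - int k + int j)"
  using assms
proof (induction j rule: nat_induct_at_least)
  case base
  show ?case using S1[of "n - int k + 1"] by (simp add: c_one)
next
  case (Suc j)
  then obtain j' where j': "j = Suc j'" by (cases j) auto
  define a where "a = ((- 1) ^ (j * (j - 1) div 2) * (1 - qfrak) ^ (j - 1) :: Cq)"
  define N where "N = n - int k + int j"
  define p where "p = n - int k + 2 * int (Suc j) - 1"
  have pN: "p = N + int j + 1" unfolding p_def N_def by simp
  have Y: "Yaux c E k n j = c a * S j N" using Suc.IH unfolding a_def N_def .
  have "Yaux c E k n (Suc j) = qcomm (c (qfrak ^ Suc j)) (Yaux c E k n j) (E p)"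
    unfolding j' p_def by simp
  also have "\<dots> = c a * (S j N * E p - c (qfrak ^ (j + 1)) * (E p * S j N))"
  proof -
    define sc where "sc = c (qfrak ^ Suc j)"
    have h1: "E p * c a = c a * E p" by (rule c_central[symmetric])
    have h2: "sc * c a = c a * sc" unfolding sc_def by (rule c_central)
    have "sc * E p * (c a * S j N) = sc * ((E p * c a) * S j N)" by (simp only: mult.assoc)
    also have "\<dots> = (sc * c a) * (E p * S j N)" by (simp only: h1 mult.assoc)
    also have "\<dots> = c a * (sc * (E p * S j N))" by (simp only: h2 mult.assoc)
    finally have e: "sc * E p * (c a * S j N) = c a * (sc * (E p * S j N))" .
    have "qcomm sc (c a * S j N) (E p) = c a * (S j N * E p) - c a * (sc * (E p * S j N))"
      unfolding qcomm_def e by (simp only: mult.assoc)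
    also have "\<dots> = c a * (S j N * E p - sc * (E p * S j N))" by (rule right_diff_distrib[symmetric])
    finally show ?thesis unfolding Y sc_def by simp
  qed
  also have "\<dots> = c a * (((- 1) ^ j * om) * S (j + 1) (N + 1))"
    unfolding key[OF pN] ..
  also have "\<dots> = c (a * ((- 1) ^ j * (1 - qfrak))) * S (Suc j) (n - int k + int (Suc j))"
  proof -
    have arg: "N + 1 = n - int k + int (Suc j)" unfolding N_def by simp
    show ?thesis unfolding c_sign_om arg by (simp add: c_mult mult.assoc)
  qed
  also have "a * ((- 1) ^ j * (1 - qfrak)) = (- 1) ^ (Suc j * (Suc j - 1) div 2) * (1 - qfrak) ^ (Suc j - 1)"
  proof -
    have d: "Suc j * (Suc j - 1) div 2 = j * (j - 1) div 2 + j"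
    proof -
      have "Suc j * (Suc j - 1) = j * (j - 1) + 2 * j" using j' by (simp add: algebra_simps)
      then show ?thesis by simp
    qed
    show ?thesis unfolding a_def d using j' by (simp add: power_add algebra_simps)
  qed
  finally show ?case .
qed

lemma Mimg_S:
  assumes "1 \<le> \<alpha>"
  shows "Mimg c E \<alpha> n = S \<alpha> n"
proof -
  define s where "s = ((- 1) ^ (\<alpha> * (\<alpha> - 1) div 2) :: Cq)"
  define d where "d = ((1 - qfrak) ^ (\<alpha> - 1) :: Cq)"
  have d0: "d \<noteq> 0" unfolding d_def using qfrak_ne1 by simp
  have ss: "s * s = 1"
  proof -
    have "s * s = ((- 1) * (- 1) :: Cq) ^ (\<alpha> * (\<alpha> - 1) div 2)" unfolding s_def by (simp only: power_mult_distrib)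
    then show ?thesis by simp
  qed
  have Y: "Yaux c E \<alpha> n \<alpha> = c (s * d) * S \<alpha> n"
    using Yaux_S[OF assms, of \<alpha> n] unfolding s_def d_def by simp
  have "Mimg c E \<alpha> n = c (s / d) * (c (s * d) * S \<alpha> n)"
    unfolding Mimg_def Y s_def d_def ..
  also have "\<dots> = c (s / d * (s * d)) * S \<alpha> n" by (simp only: mult.assoc[symmetric] c_mult[symmetric])
  also have "s / d * (s * d) = 1" using d0 ss by (simp add: field_simps)
  finally show ?thesis by (simp add: c_one)
qed

lemma S_expl:
  "S \<alpha> n = (\<Sum>J\<in>{J. J \<subseteq> {1..r+1} \<and> card J = \<alpha>}.
       prod_list (map (\<lambda>i. zpow (x i) n) (sorted_list_of_set J))
     * prod_list [x i * rinv (x i - x j). i \<leftarrow> sorted_list_of_set J, j \<leftarrow> filter (\<lambda>j. j \<notin> J) [1..<r+2]]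
     * prod_list (map G (sorted_list_of_set J)))"
  unfolding S_def Pk_def T_def Xw_def Bw_def GL_def prod_list_compr phi_def Vs_def Vl_def ..

end

theorem proposition6p10:
  fixes c :: "Cq \<Rightarrow> 'a::ring_1"
    and x G :: "nat \<Rightarrow> 'a"
    and r :: nat
  assumes c_add: "\<And>a b. c (a + b) = c a + c b"
    and c_mult: "\<And>a b. c (a * b) = c a * c b"
    and c_one: "c 1 = 1"
    and c_central: "\<And>a y. c a * y = y * c a"
    and xx_comm: "\<And>i j. i \<in> {1..r+1} \<Longrightarrow> j \<in> {1..r+1} \<Longrightarrow> x i * x j = x j * x i"
    and GG_comm: "\<And>i j. i \<in> {1..r+1} \<Longrightarrow> j \<in> {1..r+1} \<Longrightarrow> G i * G j = G j * G i"
    and Gx_comm: "\<And>i j. i \<in> {1..r+1} \<Longrightarrow> j \<in> {1..r+1} \<Longrightarrow> i \<noteq> j \<Longrightarrow> G i * x j = x j * G i"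
    and Gx_q: "\<And>i. i \<in> {1..r+1} \<Longrightarrow> G i * x i = c qfrak * x i * G i"
    and x_unit: "\<And>i. i \<in> {1..r+1} \<Longrightarrow> runit (x i)"
    and G_unit: "\<And>i. i \<in> {1..r+1} \<Longrightarrow> runit (G i)"
    and loc_unit: "\<And>i j m. i \<in> {1..r+1} \<Longrightarrow> j \<in> {1..r+1} \<Longrightarrow> i \<noteq> j \<Longrightarrow>
                     runit (x i - c (qfrak powi m) * x j)"
    and alpha: "1 \<le> \<alpha>"
  shows "Mimg c (rhoE r x G) \<alpha> n =
    (\<Sum>J\<in>{J. J \<subseteq> {1..r+1} \<and> card J = \<alpha>}.
       prod_list (map (\<lambda>i. zpow (x i) n) (sorted_list_of_set J))
     * prod_list [x i * rinv (x i - x j). i \<leftarrow> sorted_list_of_set J, j \<leftarrow> filter (\<lambda>j. j \<notin> J) [1..<r+2]]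
     * prod_list (map G (sorted_list_of_set J)))"
proof -
  interpret ctx c x G r
    by (unfold_locales) (fact c_add c_mult c_one c_central xx_comm GG_comm Gx_comm Gx_q x_unit G_unit loc_unit)+
  show ?thesis unfolding E_rhoE Mimg_S[OF alpha] S_expl ..
qed


end
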